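(* For all nonnegative integers $s,t$ there exists a positive real $\alpha_{s,t}$ such that for every $n$ and every good quadruple $(\mathbf{x},\mathbf{k},\mathbf{y},\boldsymbol\ell)$ with $\mathbf{x}$ of length $s$ and $\mathbf{y}$ of length $t$, $$\Pr[A(\mathbf{x},\mathbf{k},\mathbf{y},\boldsymbol\ell)]\ge\alpha_{s,t}\prod_{i=1}^{s}k_i^{-3/2}\prod_{j=1}^{t}\ell_j^{-3/2}.$$
   Context: The random Catalan-pair graph $CP_n$: points $1,\dots,2n$ on a line; each of $1,\dots,2n-1$ is colored red/blue independently and uniformly, and $2n$ is colored so that the number of red points is even; a uniformly random non-crossing perfect matching (no $a<b<c<d$ with $\{a,c\},\{b,d\}$ both arcs) is placed independently on the red points and on the blue points. Points $a<b$ match if they have the same color and are joined by an arc. Let $\mathbf{x}=(x_1<\dots<x_s)$, $\mathbf{k}=(k_1,\dots,k_s)$, $\mathbf{y}=(y_1<\dots<y_t)$, $\boldsymbol\ell=(\ell_1,\dots,\ell_t)$ be tuples of positive integers. The quadruple is good if (1) $1\le x_i<x_i+k_i\le 2n$ and $1\le y_j<y_j+\ell_j\le 2n$ for all $i,j$; (2) any two of the numbers $x_i,x_i+k_i,y_j,y_j+\ell_j$ differ by at least $2$; (3) there are no $i\ne j$ with $x_i<x_j<x_i+k_i<x_j+k_j$ and no $i\ne j$ with $y_i<y_j<y_i+\ell_i<y_j+\ell_j$. $A(\mathbf{x},\mathbf{k},\mathbf{y},\boldsymbol\ell)$ is the event that all $x_i,x_i+k_i$ are red and all $y_j,y_j+\ell_j$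 are blue; for each $i$ the number of red points strictly between $x_i$ and $x_i+k_i$ is even and for each $j$ the number of blue points strictly between $y_j$ and $y_j+\ell_j$ is even; and $x_i$ matches $x_i+k_i$ and $y_j$ matches $y_j+\ell_j$ for all $i,j$. *)

theory Defs
  imports "HOL-Probability.Probability"
begin

definition nc_matchings :: "nat set \<Rightarrow> (nat \<times> nat) set set" where
  "nc_matchings S = {M. (\<forall>(a,b)\<in>M. a < b \<and> a \<in> S \<and> b \<in> S)
      \<and> (\<forall>z\<in>S. \<exists>!p. p \<in> M \<and> (z = fst p \<or> z = snd p))
      \<and> \<not> (\<exists>a c b d. (a,c) \<in> M \<and> (b,d) \<in> M \<and> a < b \<and> b < c \<and> c < d)}"

text \<open>Admissible red sets: subsets of {1..2n} of even size (colours of 1..2n-1 free,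
  colour of 2n fixed by parity; this gives the uniform distribution on these sets).\<close>
definition red_sets :: "nat \<Rightarrow> nat set set" where
  "red_sets n = {R. R \<subseteq> {1..2*n} \<and> even (card R)}"

definition CP :: "nat \<Rightarrow> (nat set \<times> (nat \<times> nat) set \<times> (nat \<times> nat) set) pmf" where
  "CP n = do {
      R \<leftarrow> pmf_of_set (red_sets n);
      M1 \<leftarrow> pmf_of_set (nc_matchings R);
      M2 \<leftarrow> pmf_of_set (nc_matchings ({1..2*n} - R));
      return_pmf (R, M1, M2) }"

definition good :: "nat \<Rightarrow> nat list \<Rightarrow> nat list \<Rightarrow> nat list \<Rightarrow> nat list \<Rightarrow> bool" where
  "good n xs ks ys ls \<longleftrightarrow>
     length ks = length xs \<and> length ls = length ys \<and>
     sorted_wrt (<) xs \<and> sorted_wrt (<) ys \<and>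
     (\<forall>v\<in>set xs \<union> set ks \<union> set ys \<union> set ls. v \<ge> 1) \<and>
     (\<forall>i<length xs. 1 \<le> xs!i \<and> xs!i < xs!i + ks!i \<and> xs!i + ks!i \<le> 2*n) \<and>
     (\<forall>j<length ys. 1 \<le> ys!j \<and> ys!j < ys!j + ls!j \<and> ys!j + ls!j \<le> 2*n) \<and>
     (let E = xs @ map2 (+) xs ks @ ys @ map2 (+) ys ls in
        \<forall>i<length E. \<forall>j<length E. i \<noteq> j \<longrightarrow> E!i + 2 \<le> E!j \<or> E!j + 2 \<le> E!i) \<and>
     \<not> (\<exists>i<length xs. \<exists>j<length xs. i \<noteq> j \<and>
          xs!i < xs!j \<and> xs!j < xs!i + ks!i \<and> xs!i + ks!i < xs!j + ks!j) \<and>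
     \<not> (\<exists>i<length ys. \<exists>j<length ys. i \<noteq> j \<and>
          ys!i < ys!j \<and> ys!j < ys!i + ls!i \<and> ys!i + ls!i < ys!j + ls!j)"

definition event_A :: "nat \<Rightarrow> nat list \<Rightarrow> nat list \<Rightarrow> nat list \<Rightarrow> nat list
    \<Rightarrow> (nat set \<times> (nat \<times> nat) set \<times> (nat \<times> nat) set) set" where
  "event_A n xs ks ys ls = {(R, M1, M2).
     (\<forall>i<length xs. xs!i \<in> R \<and> xs!i + ks!i \<in> R
        \<and> even (card {z \<in> R. xs!i < z \<and> z < xs!i + ks!i})
        \<and> (xs!i, xs!i + ks!i) \<in> M1) \<and>
     (\<forall>j<length ys. ys!j \<in> {1..2*n} - R \<and> ys!j + ls!j \<in> {1..2*n} - R
        \<and> even (card {z \<in> {1..2*n} - R. ys!j < z \<and> z < ys!j + ls!j})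
        \<and> (ys!j, ys!j + ls!j) \<in> M2)}"

end

theory Submission
  imports Defs
begin

definition gg :: "nat \<Rightarrow> real" where "gg k = (1/2) gchoose k"
definition cat :: "nat \<Rightarrow> real" where "cat m = (-1)^m * (2 * 4^m) * gg (Suc m)"

lemma gg_Suc: "gg (Suc k) = gg k * (1/2 - real k) / (real k + 1)"
proof -
  have "(1/2::real) * ((1/2) gchoose k) = real k * ((1/2) gchoose k) + real (Suc k) * ((1/2) gchoose (Suc k))"
    using gbinomial_mult_1 by blast
  then show ?thesis unfolding gg_def by (simp add: field_simps)
qed

lemma p23: "(2::real)^(2*m+3) = 8 * 2^(2*m)" by (simp add: power_add)

lemma cat_0: "cat 0 = 1" by (simp add: cat_def gg_def)

lemma cat_Suc: "cat (Suc m) = cat m * (4 * real m + 2) / (real m + 2)"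
proof -
  have "cat (Suc m) = (-1)^(Suc m) * (8 * 4^m) * gg (Suc (Suc m))"
    by (simp add: cat_def)
  also have "\<dots> = (-1)^(Suc m) * (8 * 4^m) * (gg (Suc m) * (1/2 - real (Suc m)) / (real (Suc m) + 1))"
    using gg_Suc by simp
  also have "\<dots> = ((-1)^m * (2 * 4^m) * gg (Suc m)) * (4 * real m + 2) / (real m + 2)"
    by (simp add: field_simps)
  finally show ?thesis by (simp add: cat_def)
qed

lemma cat_pos: "cat m > 0"
  by (induction m) (simp_all add: cat_0 cat_Suc)

lemma gg_Suc_cat: "gg (Suc i) = (-1)^i * cat i / (2 * 4^i)"
proof -
  have "(-1::real)^i * (-1)^i = 1" by (simp add: power_mult_distrib[symmetric])
  then show ?thesis by (simp add: cat_def field_simps)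
qed

lemma cat_conv: "cat (Suc m) = (\<Sum>i\<le>m. cat i * cat (m - i))"
proof -
  let ?f = "\<lambda>k. gg k * gg (m + 2 - k)"
  have V: "(\<Sum>k\<in>{0..m+2}. ?f k) = (1::real) gchoose (m+2)"
    using gbinomial_Vandermonde[of "1/2::real" "1/2" "m+2"] by (simp add: gg_def)
  have z: "(1::real) gchoose (m+2) = 0"
    using binomial_gbinomial[of 1 "m+2", where 'a=real] by simp
  have "(\<Sum>k\<in>{0..m+2}. ?f k) = (\<Sum>k\<le>Suc (Suc m). ?f k)"
    by (simp add: atLeast0AtMost)
  also have "\<dots> = ?f 0 + (\<Sum>k\<le>Suc m. ?f (Suc k))"
    by (simp only: sum.atMost_Suc_shift)
  also have "\<dots> = ?f 0 + (\<Sum>k\<le>m. ?f (Suc k)) + ?f (Suc (Suc m))"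
    by simp
  finally have e1: "(\<Sum>k\<in>{0..m+2}. ?f k) = ?f 0 + (\<Sum>k\<le>m. ?f (Suc k)) + ?f (Suc (Suc m))" .
  have f0: "?f 0 = (-1)^(Suc m) * cat (Suc m) / (8 * 4^m)"
    using gg_Suc_cat[of "Suc m"] by (simp add: gg_def)
  have fl: "?f (Suc (Suc m)) = (-1)^(Suc m) * cat (Suc m) / (8 * 4^m)"
    using gg_Suc_cat[of "Suc m"] by (simp add: gg_def)
  have fm: "gg (Suc k) * gg (Suc m - k) = (-1)^m * (cat k * cat (m - k)) / (4 * 4^m)" if "k \<le> m" for k
  proof -
    have a: "m + 2 - Suc k = Suc (m - k)" using that by simp
    have b: "(-1::real)^k * (-1)^(m-k) = (-1)^m"
      using that by (simp add: power_add[symmetric])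
    have c: "(2 * 4^k) * (2 * 4^(m-k)) = (4 * (4::real)^m)"
      using that by (simp add: power_add[symmetric])
    have a': "Suc m - k = Suc (m - k)" using that by simp
    have "gg (Suc k) * gg (Suc m - k) = ((-1)^k * cat k / (2 * 4^k)) * ((-1)^(m-k) * cat (m-k) / (2 * 4^(m-k)))"
      by (simp only: a' gg_Suc_cat)
    also have "\<dots> = ((-1)^k * (-1)^(m-k)) * (cat k * cat (m - k)) / ((2 * 4^k) * (2 * 4^(m-k)))"
      by (simp add: field_simps)
    also have "\<dots> = (-1)^m * (cat k * cat (m - k)) / (4 * 4^m)"
      by (simp only: b c)
    finally show ?thesis .
  qed
  have "(\<Sum>k\<le>m. ?f (Suc k)) = (\<Sum>k\<le>m. (-1)^m * (cat k * cat (m - k)) / (4 * 4^m))"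
    by (rule sum.cong) (simp_all add: fm)
  also have "\<dots> = (-1)^m * (\<Sum>k\<le>m. cat k * cat (m - k)) / (4 * 4^m)"
    by (simp add: sum_distrib_left sum_divide_distrib)
  finally have mid: "(\<Sum>k\<le>m. ?f (Suc k)) = (-1)^m * (\<Sum>k\<le>m. cat k * cat (m - k)) / (4 * 4^m)" .
  have "0 = (-1)^(Suc m) * cat (Suc m) / (8 * 4^m) + (-1)^m * (\<Sum>k\<le>m. cat k * cat (m - k)) / (4 * 4^m)
     + (-1)^(Suc m) * cat (Suc m) / (8 * 4^m)"
    using V z e1 f0 fl mid by simp
  then have "0 = (-1)^m * ((\<Sum>k\<le>m. cat k * cat (m - k)) - cat (Suc m)) / (4 * 4^m)"
    by (simp add: field_simps power_add)
  moreover have "(-1::real)^m \<noteq> 0" by simp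
  ultimately show ?thesis by simp
qed

lemma cat_le4: "cat (Suc m) \<le> 4 * cat m"
proof -
  have "(4 * real m + 2) / (real m + 2) \<le> 4" by (simp add: field_simps)
  then have "cat m * ((4 * real m + 2) / (real m + 2)) \<le> cat m * 4"
    using cat_pos[of m] by (intro mult_left_mono) auto
  then show ?thesis by (simp add: cat_Suc mult.commute)
qed

lemma cat_le_pow: "cat (a + d) \<le> 4^d * cat a"
proof (induction d)
  case (Suc d)
  have "cat (a + Suc d) \<le> 4 * cat (a + d)" using cat_le4[of "a+d"] by simp
  also have "\<dots> \<le> 4 * (4^d * cat a)" using Suc by simp
  finally show ?case by simp
qed simp

lemma bsq: "j \<ge> 1 \<Longrightarrow> (cat j * (real j + 1))^2 \<ge> 16^j / (4 * real j)"
proof (induction j rule: dec_induct)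
  case base
  then show ?case by (simp add: cat_Suc cat_0)
next
  case (step j)
  let ?b = "cat j * (real j + 1)"
  have bs: "cat (Suc j) * (real (Suc j) + 1) = ?b * (4 * real j + 2) / (real j + 1)"
    by (simp add: cat_Suc field_simps)
  have jp: "real j \<ge> 1" using step by simp
  have "(cat (Suc j) * (real (Suc j) + 1))^2 = ?b^2 * ((4 * real j + 2) / (real j + 1))^2"
    unfolding bs by (simp add: power_mult_distrib power_divide)
  also have "\<dots> \<ge> 16^j / (4 * real j) * ((4 * real j + 2) / (real j + 1))^2"
    using step.IH by (intro mult_right_mono) auto
  finally have 1: "(cat (Suc j) * (real (Suc j) + 1))^2 \<ge> 16^j / (4 * real j) * ((4 * real j + 2) / (real j + 1))^2" .
  have "16^j / (4 * real j) * ((4 * real j + 2) / (real j + 1))^2 \<ge> 16^(Suc j) / (4 * real (Suc j))"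
  proof -
    have "16 * real j * (real j + 1) \<le> (4 * real j + 2)^2" by (simp add: power2_eq_square algebra_simps)
    note ineq = this
    have e1: "((4 * real j + 2) / (real j + 1))^2 / (4 * real j) = (4 * real j + 2)^2 / (4 * real j * (real j + 1)^2)"
      by (simp add: power_divide)
    have e2: "16 / (4 * (real j + 1)) = (16 * real j * (real j + 1)) / (4 * real j * (real j + 1)^2)"
      using jp apply (simp add: divide_simps power2_eq_square) by (simp add: algebra_simps)
    have "(16 * real j * (real j + 1)) / (4 * real j * (real j + 1)^2) \<le> (4 * real j + 2)^2 / (4 * real j * (real j + 1)^2)"
      using ineq jp by (intro divide_right_mono) auto
    then have "16 / (4 * (real j + 1)) \<le> ((4 * real j + 2) / (real j + 1))^2 / (4 * real j)"
      using e1 e2 by simp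
    then have "16^j * (16 / (4 * (real j + 1))) \<le> 16^j * (((4 * real j + 2) / (real j + 1))^2 / (4 * real j))"
      by (intro mult_left_mono) auto
    then show ?thesis by (simp add: field_simps)
  qed
  with 1 show ?case by linarith
qed

lemma cat_lower: "cat j / 4^(Suc j) \<ge> 1 / (8 * (real j + 1) powr (3/2))"
proof (cases "j = 0")
  case True then show ?thesis by (simp add: cat_0)
next
  case False
  then have j1: "j \<ge> 1" by simp
  have p: "(real j + 1) powr (3/2) = (real j + 1) * sqrt (real j + 1)"
  proof -
    have "(real j + 1) powr (3/2) = (real j + 1) powr (1 + 1/2)" by simp
    also have "\<dots> = (real j + 1) * (real j + 1) powr (1/2)"
      by (subst powr_add) simp
    finally show ?thesis by (simp add: powr_half_sqrt)
  qed
  let ?y = "2 * (real j + 1) * sqrt (real j + 1) * cat j"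
  have cp: "cat j > 0" by (rule cat_pos)
  have y0: "?y \<ge> 0" using cp by simp
  have "?y^2 = 2^2 * (real j + 1)^2 * (sqrt (real j + 1))^2 * (cat j)^2"
    by (simp only: power_mult_distrib)
  also have "\<dots> = 4 * (real j + 1) * ((cat j * (real j + 1))^2)"
    by (simp add: power_mult_distrib power2_eq_square)
  also have "\<dots> \<ge> 4 * (real j + 1) * (16^j / (4 * real j))"
    using bsq[OF j1] by (intro mult_left_mono) auto
  finally have 1: "?y^2 \<ge> 4 * (real j + 1) * (16^j / (4 * real j))" .
  have "4 * (real j + 1) * (16^j / (4 * real j)) \<ge> 16^j"
    using j1 by (simp add: field_simps)
  moreover have e: "((4::real)^j)^2 = 16^j" by (simp add: power2_eq_square power_mult_distrib[symmetric])
  ultimately have "?y^2 \<ge> (4^j)^2" using 1 by linarith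
  then have y: "?y \<ge> 4^j" using y0 by (rule power2_le_imp_le)
  have "1 / (8 * (real j + 1) powr (3/2)) = 1 / (8 * ((real j + 1) * sqrt (real j + 1)))" by (simp add: p)
  also have "\<dots> \<le> cat j / 4^(Suc j)"
  proof -
    have X: "(real j + 1) * sqrt (real j + 1) > 0" by simp
    have "4 * 4^j \<le> 4 * ?y" using y by simp
    also have "4 * ?y = cat j * (8 * ((real j + 1) * sqrt (real j + 1)))" by (simp add: algebra_simps)
    finally have "4 * 4^j \<le> cat j * (8 * ((real j + 1) * sqrt (real j + 1)))" .
    then show ?thesis using X by (simp add: divide_simps)
  qed
  finally show ?thesis .
qed


abbreviation ncm where "ncm \<equiv> nc_matchings"

lemma ncm_iff: "M \<in> ncm S \<longleftrightarrow> (\<forall>(a,b)\<in>M. a < b \<and> a \<in> S \<and> b \<in> S)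
      \<and> (\<forall>z\<in>S. \<exists>!p. p \<in> M \<and> (z = fst p \<or> z = snd p))
      \<and> \<not> (\<exists>a c b d. (a,c) \<in> M \<and> (b,d) \<in> M \<and> a < b \<and> b < c \<and> c < d)"
  by (simp add: nc_matchings_def)

lemma ncm_arc: "M \<in> ncm S \<Longrightarrow> (x,y) \<in> M \<Longrightarrow> x < y \<and> x \<in> S \<and> y \<in> S"
  unfolding ncm_iff by blast

lemma ncm_nocross: "M \<in> ncm S \<Longrightarrow> (a,c) \<in> M \<Longrightarrow> (b,d) \<in> M \<Longrightarrow> a < b \<Longrightarrow> b < c \<Longrightarrow> c < d \<Longrightarrow> False"
  unfolding ncm_iff by blast

lemma ncm_cover: "M \<in> ncm S \<Longrightarrow> z \<in> S \<Longrightarrow> \<exists>p\<in>M. z = fst p \<or> z = snd p"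
  unfolding ncm_iff by blast

lemma ncm_uniq: "M \<in> ncm S \<Longrightarrow> p \<in> M \<Longrightarrow> q \<in> M \<Longrightarrow> z = fst p \<or> z = snd p \<Longrightarrow> z = fst q \<or> z = snd q \<Longrightarrow> p = q"
proof -
  assume M: "M \<in> ncm S" and p: "p \<in> M" and q: "q \<in> M" and zp: "z = fst p \<or> z = snd p" and zq: "z = fst q \<or> z = snd q"
  have "z \<in> S" using ncm_arc[OF M, of "fst p" "snd p"] p zp by auto
  then have "\<exists>!p. p \<in> M \<and> (z = fst p \<or> z = snd p)" using M unfolding ncm_iff by blast
  then show "p = q" using p q zp zq by blast
qed

lemma ncm_finite: "finite S \<Longrightarrow> finite (ncm S)"
proof -
  assume "finite S"
  have "ncm S \<subseteq> Pow (S \<times> S)" using ncm_arc by fastforce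
  moreover have "finite (Pow (S \<times> S))" using \<open>finite S\<close> by simp
  ultimately show ?thesis by (rule finite_subset)
qed

definition Sin :: "nat \<Rightarrow> nat \<Rightarrow> nat set \<Rightarrow> nat set" where "Sin a b S = {z\<in>S. a < z \<and> z < b}"
definition Sout :: "nat \<Rightarrow> nat \<Rightarrow> nat set \<Rightarrow> nat set" where "Sout a b S = {z\<in>S. z < a \<or> b < z}"
definition FF :: "nat set \<Rightarrow> (nat\<times>nat) set \<Rightarrow> (nat\<times>nat) set set" where "FF S As = {M \<in> ncm S. As \<subseteq> M}"

lemma split_fwd:
  assumes ab: "a < b" "a \<in> S" "b \<in> S"
    and M1: "M1 \<in> ncm (Sin a b S)" and M2: "M2 \<in> ncm (Sout a b S)"
  shows "insert (a,b) (M1 \<union> M2) \<in> ncm S"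
proof -
  let ?M = "insert (a,b) (M1 \<union> M2)"
  have a1: "\<And>x y. (x,y) \<in> M1 \<Longrightarrow> x < y \<and> a < x \<and> x < b \<and> a < y \<and> y < b \<and> x \<in> S \<and> y \<in> S"
    using ncm_arc[OF M1] unfolding Sin_def by blast
  have a2: "\<And>x y. (x,y) \<in> M2 \<Longrightarrow> x < y \<and> (x < a \<or> b < x) \<and> (y < a \<or> b < y) \<and> x \<in> S \<and> y \<in> S"
    using ncm_arc[OF M2] unfolding Sout_def by blast
  have P1: "\<forall>(x,y)\<in>?M. x < y \<and> x \<in> S \<and> y \<in> S" using a1 a2 ab by blast
  have P2: "\<forall>z\<in>S. \<exists>!p. p \<in> ?M \<and> (z = fst p \<or> z = snd p)"
  proof
    fix z assume z: "z \<in> S"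
    consider "z = a" | "z = b" | "z \<in> Sin a b S" | "z \<in> Sout a b S"
      using z unfolding Sin_def Sout_def by force
    then show "\<exists>!p. p \<in> ?M \<and> (z = fst p \<or> z = snd p)"
    proof cases
      case 1
      show ?thesis
      proof (rule ex1I[of _ "(a,b)"])
        show "(a,b) \<in> ?M \<and> (z = fst (a,b) \<or> z = snd (a,b))" using 1 by simp
        fix p assume "p \<in> ?M \<and> (z = fst p \<or> z = snd p)"
        then show "p = (a,b)" using 1 a1[of "fst p" "snd p"] a2[of "fst p" "snd p"] ab by auto
      qed
    next
      case 2
      show ?thesis
      proof (rule ex1I[of _ "(a,b)"])
        show "(a,b) \<in> ?M \<and> (z = fst (a,b) \<or> z = snd (a,b))" using 2 by simp
        fix p assume "p \<in> ?M \<and> (z = fst p \<or> z = snd p)"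
        then show "p = (a,b)" using 2 a1[of "fst p" "snd p"] a2[of "fst p" "snd p"] ab by auto
      qed
    next
      case 3
      then obtain p where p: "p \<in> M1" "z = fst p \<or> z = snd p" using ncm_cover[OF M1] by blast
      show ?thesis
      proof (rule ex1I[of _ p])
        show "p \<in> ?M \<and> (z = fst p \<or> z = snd p)" using p by simp
        fix q assume q: "q \<in> ?M \<and> (z = fst q \<or> z = snd q)"
        have zi: "a < z" "z < b" using 3 unfolding Sin_def by auto
        have "q \<in> M1"
        proof -
          have "q \<noteq> (a,b)" using q zi by auto
          moreover have "q \<notin> M2" using q zi a2[of "fst q" "snd q"] by auto
          ultimately show ?thesis using q by auto
        qed
        then show "q = p" using ncm_uniq[OF M1 _ p(1)] q p(2) by blast
      qed
    next
      case 4
      then obtain p where p: "p \<in> M2" "z = fst p \<or> z = snd p" using ncm_cover[OF M2] by blast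
      show ?thesis
      proof (rule ex1I[of _ p])
        show "p \<in> ?M \<and> (z = fst p \<or> z = snd p)" using p by simp
        fix q assume q: "q \<in> ?M \<and> (z = fst q \<or> z = snd q)"
        have zi: "z < a \<or> b < z" using 4 unfolding Sout_def by auto
        have "q \<in> M2"
        proof -
          have "q \<noteq> (a,b)" using q zi ab by auto
          moreover have "q \<notin> M1" using q zi a1[of "fst q" "snd q"] by auto
          ultimately show ?thesis using q by auto
        qed
        then show "q = p" using ncm_uniq[OF M2 _ p(1)] q p(2) by blast
      qed
    qed
  qed
  have P3: "\<not> (\<exists>x u y v. (x,u) \<in> ?M \<and> (y,v) \<in> ?M \<and> x < y \<and> y < u \<and> u < v)"
  proof
    assume "\<exists>x u y v. (x,u) \<in> ?M \<and> (y,v) \<in> ?M \<and> x < y \<and> y < u \<and> u < v"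
    then obtain x u y v where c: "(x,u) \<in> ?M" "(y,v) \<in> ?M" "x < y" "y < u" "u < v" by blast
    show False
    proof (cases "(x,u) \<in> M1")
      case x1: True
      show False
      proof (cases "(y,v) \<in> M1")
        case True then show False using ncm_nocross[OF M1 x1 True] c by blast
      next
        case False
        then have "(y,v) = (a,b) \<or> (y,v) \<in> M2" using c by auto
        then show False using a1[OF x1] a2[of y v] c by auto
      qed
    next
      case x1: False
      show False
      proof (cases "(x,u) \<in> M2")
        case x2: True
        show False
        proof (cases "(y,v) \<in> M2")
          case True then show False using ncm_nocross[OF M2 x2 True] c by blast
        next
          case False
          then have "(y,v) = (a,b) \<or> (y,v) \<in> M1" using c by auto
          then show False using a2[OF x2] a1[of y v] c by auto
        qed
      next
        case False
        then have xu: "(x,u) = (a,b)" using x1 c by auto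
        have "(y,v) \<in> M1 \<or> (y,v) \<in> M2" using c xu by auto
        then show False using a1[of y v] a2[of y v] c xu by auto
      qed
    qed
  qed
  show ?thesis unfolding ncm_iff using P1 P2 P3 by blast
qed

lemma split_bwd:
  assumes ab: "a < b" and M: "M \<in> ncm S" and abM: "(a,b) \<in> M"
  shows "{p\<in>M. a < fst p \<and> fst p < b} \<in> ncm (Sin a b S)"
    and "{p\<in>M. fst p < a \<or> b < fst p} \<in> ncm (Sout a b S)"
    and "M = insert (a,b) ({p\<in>M. a < fst p \<and> fst p < b} \<union> {p\<in>M. fst p < a \<or> b < fst p})"
proof -
  let ?M1 = "{p\<in>M. a < fst p \<and> fst p < b}"
  let ?M2 = "{p\<in>M. fst p < a \<or> b < fst p}"
  have aS: "a \<in> S" "b \<in> S" using ncm_arc[OF M abM] by auto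
  have in1: "a < d \<and> d < b" if "(c,d) \<in> M" "a < c" "c < b" for c d
  proof -
    have cd: "c < d" "d \<in> S" using ncm_arc[OF M that(1)] by auto
    have "d \<noteq> b" using ncm_uniq[OF M that(1) abM, of b] that by auto
    moreover have "\<not> b < d" using ncm_nocross[OF M abM that(1)] that by auto
    ultimately show ?thesis using cd that by auto
  qed
  have in2: "d < a \<or> b < d" if "(c,d) \<in> M" "c < a \<or> b < c" for c d
  proof -
    have cd: "c < d" using ncm_arc[OF M that(1)] by auto
    have "d \<noteq> b" using ncm_uniq[OF M that(1) abM, of b] that ab by auto
    moreover have "d \<noteq> a" using ncm_uniq[OF M that(1) abM, of a] that ab by auto
    moreover have "\<not> (c < a \<and> a < d \<and> d < b)" using ncm_nocross[OF M that(1) abM] by auto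
    ultimately show ?thesis using cd that by auto
  qed
  show eq: "M = insert (a,b) (?M1 \<union> ?M2)"
  proof
    show "M \<subseteq> insert (a,b) (?M1 \<union> ?M2)"
    proof
      fix p assume p: "p \<in> M"
      show "p \<in> insert (a,b) (?M1 \<union> ?M2)"
      proof (cases "fst p = a \<or> fst p = b")
        case True
        then have "p = (a,b)" using ncm_uniq[OF M p abM, of "fst p"] by auto
        then show ?thesis by simp
      next
        case False then show ?thesis using p by auto
      qed
    qed
  qed (use abM in auto)
  show "?M1 \<in> ncm (Sin a b S)"
    unfolding ncm_iff
  proof (intro conjI)
    show "\<forall>(x,y)\<in>?M1. x < y \<and> x \<in> Sin a b S \<and> y \<in> Sin a b S"
      using in1 ncm_arc[OF M] unfolding Sin_def by fastforce
    show "\<forall>z\<in>Sin a b S. \<exists>!p. p \<in> ?M1 \<and> (z = fst p \<or> z = snd p)"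
    proof
      fix z assume z: "z \<in> Sin a b S"
      then have zS: "z \<in> S" "a < z" "z < b" unfolding Sin_def by auto
      obtain p where p: "p \<in> M" "z = fst p \<or> z = snd p" using ncm_cover[OF M zS(1)] by blast
      have "a < fst p \<and> fst p < b"
      proof (cases "z = fst p")
        case True then show ?thesis using zS by auto
      next
        case False
        then have zs: "z = snd p" using p by auto
        have "fst p < z" using ncm_arc[OF M, of "fst p" "snd p"] p zs by auto
        moreover have "fst p \<noteq> a"
        proof
          assume "fst p = a"
          then have "p = (a,b)" using ncm_uniq[OF M p(1) abM, of a] by auto
          then show False using zs zS by auto
        qed
        moreover have "\<not> fst p < a" using ncm_nocross[OF M, of "fst p" "snd p" a b] p zs zS abM by auto
        ultimately show ?thesis using zS by auto
      qed
      then have "p \<in> ?M1" using p by simp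
      then show "\<exists>!p. p \<in> ?M1 \<and> (z = fst p \<or> z = snd p)"
        using p ncm_uniq[OF M] by blast
    qed
    show "\<not> (\<exists>x u y v. (x,u) \<in> ?M1 \<and> (y,v) \<in> ?M1 \<and> x < y \<and> y < u \<and> u < v)"
      using ncm_nocross[OF M] by blast
  qed
  show "?M2 \<in> ncm (Sout a b S)"
    unfolding ncm_iff
  proof (intro conjI)
    show "\<forall>(x,y)\<in>?M2. x < y \<and> x \<in> Sout a b S \<and> y \<in> Sout a b S"
      using in2 ncm_arc[OF M] unfolding Sout_def by fastforce
    show "\<forall>z\<in>Sout a b S. \<exists>!p. p \<in> ?M2 \<and> (z = fst p \<or> z = snd p)"
    proof
      fix z assume z: "z \<in> Sout a b S"
      then have zS: "z \<in> S" "z < a \<or> b < z" unfolding Sout_def by auto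
      obtain p where p: "p \<in> M" "z = fst p \<or> z = snd p" using ncm_cover[OF M zS(1)] by blast
      have "fst p < a \<or> b < fst p"
      proof (cases "z = fst p")
        case True then show ?thesis using zS by auto
      next
        case False
        then have zs: "z = snd p" using p by auto
        have "p \<noteq> (a,b)" using zs zS ab by auto
        then have "fst p \<noteq> a \<and> fst p \<noteq> b" using ncm_uniq[OF M p(1) abM] by auto
        moreover have "\<not> (a < fst p \<and> fst p < b)" using in1[of "fst p" "snd p"] p zs zS by auto
        ultimately show ?thesis by auto
      qed
      then have "p \<in> ?M2" using p by simp
      then show "\<exists>!p. p \<in> ?M2 \<and> (z = fst p \<or> z = snd p)"
        using p ncm_uniq[OF M] by blast
    qed
    show "\<not> (\<exists>x u y v. (x,u) \<in> ?M2 \<and> (y,v) \<in> ?M2 \<and> x < y \<and> y < u \<and> u < v)"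
      using ncm_nocross[OF M] by blast
  qed
qed

lemma split_card:
  assumes ab: "a < b" "a \<in> S" "b \<in> S"
    and Ain: "\<forall>p\<in>Ain. a < fst p \<and> fst p < b" and Aout: "\<forall>p\<in>Aout. fst p < a \<or> b < fst p"
  shows "card (FF S (insert (a,b) (Ain \<union> Aout))) = card (FF (Sin a b S) Ain) * card (FF (Sout a b S) Aout)"
proof -
  define phi where "phi = (\<lambda>(M1::(nat\<times>nat) set, M2::(nat\<times>nat) set). insert (a,b) (M1 \<union> M2))"
  let ?D = "FF (Sin a b S) Ain \<times> FF (Sout a b S) Aout"
  have f1: "\<And>M1 M2. (M1,M2) \<in> ?D \<Longrightarrow> M1 = {p\<in>phi (M1,M2). a < fst p \<and> fst p < b}"
  proof -
    fix M1 M2 assume "(M1,M2) \<in> ?D"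
    then have M1: "M1 \<in> ncm (Sin a b S)" and M2: "M2 \<in> ncm (Sout a b S)" unfolding FF_def by auto
    have "\<And>x y. (x,y) \<in> M1 \<Longrightarrow> a < x \<and> x < b" using ncm_arc[OF M1] unfolding Sin_def by blast
    moreover have "\<And>x y. (x,y) \<in> M2 \<Longrightarrow> x < a \<or> b < x" using ncm_arc[OF M2] unfolding Sout_def by blast
    ultimately show "M1 = {p\<in>phi (M1,M2). a < fst p \<and> fst p < b}" unfolding phi_def by force
  qed
  have f2: "\<And>M1 M2. (M1,M2) \<in> ?D \<Longrightarrow> M2 = {p\<in>phi (M1,M2). fst p < a \<or> b < fst p}"
  proof -
    fix M1 M2 assume "(M1,M2) \<in> ?D"
    then have M1: "M1 \<in> ncm (Sin a b S)" and M2: "M2 \<in> ncm (Sout a b S)" unfolding FF_def by auto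
    have "\<And>x y. (x,y) \<in> M1 \<Longrightarrow> a < x \<and> x < b" using ncm_arc[OF M1] unfolding Sin_def by blast
    moreover have "\<And>x y. (x,y) \<in> M2 \<Longrightarrow> x < a \<or> b < x" using ncm_arc[OF M2] unfolding Sout_def by blast
    ultimately show "M2 = {p\<in>phi (M1,M2). fst p < a \<or> b < fst p}" unfolding phi_def using ab by force
  qed
  have inj: "inj_on phi ?D"
  proof (rule inj_onI)
    fix u v assume u: "u \<in> ?D" and v: "v \<in> ?D" and e: "phi u = phi v"
    obtain u1 u2 where uu: "u = (u1,u2)" by (cases u)
    obtain v1 v2 where vv: "v = (v1,v2)" by (cases v)
    show "u = v" using f1[of u1 u2] f2[of u1 u2] f1[of v1 v2] f2[of v1 v2] u v e uu vv by simp
  qed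
  have img: "phi ` ?D = FF S (insert (a,b) (Ain \<union> Aout))"
  proof
    show "phi ` ?D \<subseteq> FF S (insert (a,b) (Ain \<union> Aout))"
    proof
      fix M assume "M \<in> phi ` ?D"
      then obtain M1 M2 where M: "M = phi (M1,M2)" and D: "(M1,M2) \<in> ?D" by auto
      then have "M \<in> ncm S" using split_fwd[OF ab] unfolding FF_def phi_def by auto
      moreover have "insert (a,b) (Ain \<union> Aout) \<subseteq> M" using D M unfolding FF_def phi_def by auto
      ultimately show "M \<in> FF S (insert (a,b) (Ain \<union> Aout))" unfolding FF_def by simp
    qed
    show "FF S (insert (a,b) (Ain \<union> Aout)) \<subseteq> phi ` ?D"
    proof
      fix M assume "M \<in> FF S (insert (a,b) (Ain \<union> Aout))"
      then have M: "M \<in> ncm S" and As: "insert (a,b) (Ain \<union> Aout) \<subseteq> M" unfolding FF_def by auto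
      have abM: "(a,b) \<in> M" using As by auto
      let ?M1 = "{p\<in>M. a < fst p \<and> fst p < b}"
      let ?M2 = "{p\<in>M. fst p < a \<or> b < fst p}"
      have "(?M1, ?M2) \<in> ?D"
        using split_bwd(1,2)[OF ab(1) M abM] As Ain Aout unfolding FF_def by auto
      moreover have "M = phi (?M1, ?M2)" using split_bwd(3)[OF ab(1) M abM] unfolding phi_def by simp
      ultimately show "M \<in> phi ` ?D" by blast
    qed
  qed
  have "card (FF S (insert (a,b) (Ain \<union> Aout))) = card ?D"
    using card_image[OF inj] img by simp
  then show ?thesis by (simp add: card_cartesian_product)
qed


lemma sum_rank:
  fixes A :: "nat set"
  assumes "finite A"
  shows "(\<Sum>b\<in>A. h (card {z\<in>A. z < b}) (card {z\<in>A. b < z})) = (\<Sum>j<card A. h j (card A - 1 - j))"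
  using assms
proof (induction A arbitrary: h rule: finite_linorder_max_induct)
  case empty then show ?case by simp
next
  case (insert m A)
  have mA: "m \<notin> A" using insert by auto
  have e1: "\<And>b. b \<in> A \<Longrightarrow> {z\<in>insert m A. z < b} = {z\<in>A. z < b}" using insert by auto
  have e2: "\<And>b. b \<in> A \<Longrightarrow> {z\<in>insert m A. b < z} = insert m {z\<in>A. b < z}" using insert by auto
  have e3: "{z\<in>insert m A. z < m} = A" using insert by auto
  have e4: "{z\<in>insert m A. m < z} = {}" using insert by auto
  have "(\<Sum>b\<in>insert m A. h (card {z\<in>insert m A. z < b}) (card {z\<in>insert m A. b < z}))
      = h (card A) 0 + (\<Sum>b\<in>A. h (card {z\<in>A. z < b}) (card {z\<in>A. b < z} + 1))"
  proof -
    have "(\<Sum>b\<in>A. h (card {z\<in>insert m A. z < b}) (card {z\<in>insert m A. b < z}))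
        = (\<Sum>b\<in>A. h (card {z\<in>A. z < b}) (card {z\<in>A. b < z} + 1))"
    proof (rule sum.cong)
      fix b assume b: "b \<in> A"
      have "m \<notin> {z\<in>A. b < z}" using mA by auto
      moreover have "finite {z\<in>A. b < z}" using insert by auto
      ultimately show "h (card {z\<in>insert m A. z < b}) (card {z\<in>insert m A. b < z}) = h (card {z\<in>A. z < b}) (card {z\<in>A. b < z} + 1)"
        using e1[OF b] e2[OF b] by simp
    qed simp
    moreover have "(\<Sum>b\<in>insert m A. h (card {z\<in>insert m A. z < b}) (card {z\<in>insert m A. b < z}))
       = h (card {z\<in>insert m A. z < m}) (card {z\<in>insert m A. m < z}) + (\<Sum>b\<in>A. h (card {z\<in>insert m A. z < b}) (card {z\<in>insert m A. b < z}))"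
      by (rule sum.insert[OF insert.hyps(1) mA])
    ultimately show ?thesis unfolding e3 e4 by simp
  qed
  also have "\<dots> = h (card A) 0 + (\<Sum>j<card A. h j (card A - 1 - j + 1))"
    using insert.IH[of "\<lambda>i j. h i (j + 1)"] by simp
  also have "\<dots> = h (card A) 0 + (\<Sum>j<card A. h j (card A - j))"
    by (intro arg_cong2[where f="(+)"] refl sum.cong) (auto simp: Suc_diff_Suc)
  also have "\<dots> = (\<Sum>j<card (insert m A). h j (card (insert m A) - 1 - j))"
    using insert mA by (simp add: lessThan_Suc)
  finally show ?case .
qed

lemma sum_split_parity: "(\<Sum>j<2*(m::nat)+1. g j) = (\<Sum>i\<le>m. g (2*i)) + (\<Sum>i<m. g (2*i+1))"
proof (induction m)
  case 0 then show ?case by simp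
next
  case (Suc m)
  have "(\<Sum>j<2*Suc m+1. g j) = (\<Sum>j<2*m+1. g j) + (g (2*m+1) + g (2*m+2))"
    by (simp add: lessThan_Suc ac_simps)
  also have "\<dots> = ((\<Sum>i\<le>m. g (2*i)) + (\<Sum>i<m. g (2*i+1))) + (g (2*m+1) + g (2*m+2))"
    using Suc.IH by simp
  also have "\<dots> = (\<Sum>i\<le>Suc m. g (2*i)) + (\<Sum>i<Suc m. g (2*i+1))"
    by (simp add: atMost_Suc lessThan_Suc ac_simps)
  finally show ?case .
qed

definition fcat :: "nat \<Rightarrow> real" where "fcat x = (if even x then cat (x div 2) else 0)"

lemma conv_fcat_even: "(\<Sum>j<2*m+1. fcat j * fcat (2*m - j)) = cat (Suc m)"
proof -
  have "(\<Sum>j<2*m+1. fcat j * fcat (2*m - j)) = (\<Sum>i\<le>m. fcat (2*i) * fcat (2*m - 2*i)) + (\<Sum>i<m. fcat (2*i+1) * fcat (2*m - (2*i+1)))"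
    by (rule sum_split_parity)
  also have "(\<Sum>i<m. fcat (2*i+1) * fcat (2*m - (2*i+1))) = 0" by (simp add: fcat_def)
  also have "(\<Sum>i\<le>m. fcat (2*i) * fcat (2*m - 2*i)) = (\<Sum>i\<le>m. cat i * cat (m - i))"
  proof (rule sum.cong)
    fix i assume "i \<in> {..m}"
    then have "2*m - 2*i = 2*(m-i)" by simp
    then show "fcat (2*i) * fcat (2*m - 2*i) = cat i * cat (m - i)" by (simp add: fcat_def)
  qed simp
  finally show ?thesis by (simp add: cat_conv)
qed

lemma conv_fcat_odd: "(\<Sum>j<2*m. fcat j * fcat (2*m - 1 - j)) = 0"
proof (rule sum.neutral, rule ballI)
  fix j assume "j \<in> {..<2*m}"
  then have j: "j < 2*m" by auto
  have "odd j \<or> odd (2*m - 1 - j)"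
  proof (cases "even j")
    case True
    then obtain i where i: "j = 2*i" by blast
    then have "i < m" using j by simp
    then have "2*m - 1 - j = 2*(m-i-1)+1" using i by simp
    then show ?thesis by simp
  qed simp
  then show "fcat j * fcat (2*m - 1 - j) = 0" by (auto simp: fcat_def)
qed

lemma ncm_empty: "ncm {} = {{}}"
  by (force simp: nc_matchings_def)

lemma FF_empty: "FF S {} = ncm S" by (simp add: FF_def)

lemma ncm_card: "finite S \<Longrightarrow> real (card (ncm S)) = fcat (card S)"
proof (induction "card S" arbitrary: S rule: less_induct)
  case less
  show ?case
  proof (cases "S = {}")
    case True then show ?thesis by (simp add: ncm_empty fcat_def cat_0)
  next
    case False
    define a where "a = Min S"
    have aS: "a \<in> S" using False less.prems by (simp add: a_def)
    have amin: "\<And>z. z \<in> S \<Longrightarrow> a \<le> z" using less.prems by (simp add: a_def)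
    define A where "A = S - {a}"
    have finA: "finite A" using less.prems by (simp add: A_def)
    have cA: "card A = card S - 1" using aS less.prems by (simp add: A_def)
    have cS: "card S = Suc (card A)" using aS less.prems False cA by (simp add: card_gt_0_iff)
    have U: "ncm S = (\<Union>b\<in>A. FF S {(a,b)})"
    proof
      show "ncm S \<subseteq> (\<Union>b\<in>A. FF S {(a,b)})"
      proof
        fix M assume M: "M \<in> ncm S"
        obtain p where p: "p \<in> M" "a = fst p \<or> a = snd p" using ncm_cover[OF M aS] by blast
        have ar: "fst p < snd p" "fst p \<in> S" "snd p \<in> S" using ncm_arc[OF M, of "fst p" "snd p"] p by auto
        then have "a = fst p" using p amin[of "fst p"] by auto
        then have pe: "p = (a, snd p)" and pA: "snd p \<in> A" using ar by (auto simp: A_def prod_eq_iff)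
        have "M \<in> FF S {(a, snd p)}" unfolding FF_def using M p(1) pe by auto
        then show "M \<in> (\<Union>b\<in>A. FF S {(a,b)})" using pA by blast
      qed
    qed (auto simp: FF_def)
    have fin: "\<forall>b\<in>A. finite (FF S {(a,b)})" using ncm_finite[OF less.prems] unfolding FF_def by auto
    have disj: "\<forall>b\<in>A. \<forall>b'\<in>A. b \<noteq> b' \<longrightarrow> FF S {(a,b)} \<inter> FF S {(a,b')} = {}"
    proof (intro ballI impI)
      fix b b' assume "b \<in> A" "b' \<in> A" "b \<noteq> b'"
      show "FF S {(a,b)} \<inter> FF S {(a,b')} = {}"
      proof (rule ccontr)
        assume "FF S {(a,b)} \<inter> FF S {(a,b')} \<noteq> {}"
        then obtain M where "M \<in> ncm S" "(a,b) \<in> M" "(a,b') \<in> M" unfolding FF_def by auto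
        then have "(a,b) = (a,b')" using ncm_uniq[of M S "(a,b)" "(a,b')" a] by auto
        then show False using \<open>b \<noteq> b'\<close> by simp
      qed
    qed
    have card1: "real (card (FF S {(a,b)})) = fcat (card {z\<in>A. z < b}) * fcat (card {z\<in>A. b < z})" if b: "b \<in> A" for b
    proof -
      have ab: "a < b" "b \<in> S" using b amin[of b] by (auto simp: A_def)
      have "card (FF S {(a,b)}) = card (FF (Sin a b S) {}) * card (FF (Sout a b S) {})"
        using split_card[OF ab(1) aS ab(2), of "{}" "{}"] by simp
      moreover have "Sin a b S = {z\<in>A. z < b}" unfolding Sin_def A_def using amin by force
      moreover have "Sout a b S = {z\<in>A. b < z}" unfolding Sout_def A_def using amin ab by force
      moreover have "card {z\<in>A. z < b} < card S" "card {z\<in>A. b < z} < card S"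
      proof -
        have "card {z\<in>A. z < b} \<le> card A" "card {z\<in>A. b < z} \<le> card A"
          by (rule card_mono[OF finA], blast)+
        then show "card {z\<in>A. z < b} < card S" "card {z\<in>A. b < z} < card S" using cS by auto
      qed
      moreover have "finite {z\<in>A. z < b}" "finite {z\<in>A. b < z}" using finA by auto
      ultimately show ?thesis using less.hyps by (simp add: FF_empty)
    qed
    have "real (card (ncm S)) = real (\<Sum>b\<in>A. card (FF S {(a,b)}))"
      unfolding U by (subst card_UN_disjoint[OF finA fin disj]) rule
    also have "\<dots> = (\<Sum>b\<in>A. fcat (card {z\<in>A. z < b}) * fcat (card {z\<in>A. b < z}))"
      using card1 by simp
    also have "\<dots> = (\<Sum>j<card A. fcat j * fcat (card A - 1 - j))"
      by (rule sum_rank[OF finA])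
    also have "\<dots> = fcat (card S)"
    proof (cases "even (card A)")
      case True
      then obtain m where m: "card A = 2*m" by blast
      then have "(\<Sum>j<card A. fcat j * fcat (card A - 1 - j)) = 0" using conv_fcat_odd[of m] by simp
      moreover have "fcat (card S) = 0" using cS m by (simp add: fcat_def)
      ultimately show ?thesis by simp
    next
      case False
      then obtain m where m: "card A = 2*m+1" using oddE by blast
      then have "(\<Sum>j<card A. fcat j * fcat (card A - 1 - j)) = cat (Suc m)" using conv_fcat_even[of m] by simp
      moreover have "fcat (card S) = cat (Suc m)" using cS m by (simp add: fcat_def)
      ultimately show ?thesis by simp
    qed
    finally show ?thesis .
  qed
qed


definition arcw :: "nat \<times> nat \<Rightarrow> real" where "arcw p = 1 / (8 * real (snd p - fst p) powr (3/2))"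

lemma arcw_nonneg: "arcw p \<ge> 0" by (simp add: arcw_def)

lemma Sin_Sout_card:
  assumes "finite S" "a < b" "a \<in> S" "b \<in> S"
  shows "card S = card (Sin a b S) + card (Sout a b S) + 2"
proof -
  have S: "S = {a,b} \<union> Sin a b S \<union> Sout a b S" using assms unfolding Sin_def Sout_def by force
  have f: "finite (Sin a b S)" "finite (Sout a b S)" using assms by (auto simp: Sin_def Sout_def)
  have d1: "{a,b} \<inter> (Sin a b S \<union> Sout a b S) = {}" "Sin a b S \<inter> Sout a b S = {}"
    unfolding Sin_def Sout_def using assms by auto
  have "card S = card {a,b} + card (Sin a b S \<union> Sout a b S)"
    by (subst S) (metis card_Un_disjoint d1(1) f finite.emptyI finite.insertI finite_UnI sup_assoc)
  also have "\<dots> = 2 + (card (Sin a b S) + card (Sout a b S))"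
    using card_Un_disjoint[OF f d1(2)] assms by simp
  finally show ?thesis by simp
qed

lemma card_Sin_le: "card (Sin a b S) \<le> b - a - 1"
proof -
  have "Sin a b S \<subseteq> {a<..<b}" unfolding Sin_def by auto
  then have "card (Sin a b S) \<le> card {a<..<b}" by (rule card_mono[rotated]) simp
  then show ?thesis by simp
qed

lemma one_arc:
  assumes fin: "finite S" and ev: "even (card S)" and ab: "a < b" "a \<in> S" "b \<in> S"
    and evi: "even (card (Sin a b S))"
  shows "real (card (FF S {(a,b)})) \<ge> real (card (ncm S)) * arcw (a,b)"
proof -
  have fi: "finite (Sin a b S)" "finite (Sout a b S)" using fin by (auto simp: Sin_def Sout_def)
  have cs: "card S = card (Sin a b S) + card (Sout a b S) + 2" by (rule Sin_Sout_card[OF fin ab])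
  obtain j where j: "card (Sin a b S) = 2*j" using evi by blast
  obtain m where m: "card S = 2*m" using ev by blast
  have evo: "card (Sout a b S) = 2*(m - 1 - j)" and mj: "m = (m - 1 - j) + Suc j" using cs j m by auto
  have "card (FF S {(a,b)}) = card (FF (Sin a b S) {}) * card (FF (Sout a b S) {})"
    using split_card[OF ab, of "{}" "{}"] by simp
  then have eF: "real (card (FF S {(a,b)})) = cat j * cat (m - 1 - j)"
    using ncm_card[OF fi(1)] ncm_card[OF fi(2)] j evo by (simp add: FF_empty fcat_def)
  have eS: "real (card (ncm S)) = cat m" using ncm_card[OF fin] m by (simp add: fcat_def)
  have jb: "real j + 1 \<le> real (b - a)" using card_Sin_le[of a b S] j ab by simp
  have "arcw (a,b) \<le> 1 / (8 * (real j + 1) powr (3/2))"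
    unfolding arcw_def using jb by (simp add: frac_le powr_mono2)
  also have "\<dots> \<le> cat j / 4^(Suc j)" by (rule cat_lower)
  finally have w: "arcw (a,b) \<le> cat j / 4^(Suc j)" .
  have cm: "cat m \<le> 4^(Suc j) * cat (m - 1 - j)"
    using cat_le_pow[of "m - 1 - j" "Suc j"] mj by simp
  have "real (card (ncm S)) * arcw (a,b) \<le> cat m * (cat j / 4^(Suc j))"
    unfolding eS using w cat_pos[of m] by (intro mult_left_mono) auto
  also have "\<dots> \<le> (4^(Suc j) * cat (m - 1 - j)) * (cat j / 4^(Suc j))"
    using cm cat_pos[of j] by (intro mult_right_mono) auto
  also have "\<dots> = cat j * cat (m - 1 - j)" by simp
  finally show ?thesis using eF by simp
qed

definition arcs_ok :: "nat set \<Rightarrow> (nat\<times>nat) set \<Rightarrow> bool" where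
  "arcs_ok S As \<longleftrightarrow> (\<forall>(c,d)\<in>As. c < d \<and> c \<in> S \<and> d \<in> S \<and> even (card (Sin c d S)))
     \<and> (\<forall>p\<in>As. \<forall>q\<in>As. p \<noteq> q \<longrightarrow> fst p \<noteq> fst q \<and> fst p \<noteq> snd q \<and> snd p \<noteq> fst q \<and> snd p \<noteq> snd q)
     \<and> (\<forall>(c,d)\<in>As. \<forall>(e,f)\<in>As. \<not> (c < e \<and> e < d \<and> d < f))"

lemma multi_arc:
  assumes "finite As" "finite S" "even (card S)" "arcs_ok S As"
  shows "real (card (FF S As)) \<ge> real (card (ncm S)) * (\<Prod>p\<in>As. arcw p)"
  using assms
proof (induction "card As" arbitrary: As S rule: less_induct)
  case less
  show ?case
  proof (cases "As = {}")
    case True then show ?thesis by (simp add: FF_empty)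
  next
    case False
    note AO = less.prems(4)[unfolded arcs_ok_def]
    have ok1: "c < d \<and> c \<in> S \<and> d \<in> S \<and> even (card (Sin c d S))" if "(c,d) \<in> As" for c d
      using bspec[OF conjunct1[OF AO] that] by simp
    have ok2: "fst p \<noteq> fst q \<and> fst p \<noteq> snd q \<and> snd p \<noteq> fst q \<and> snd p \<noteq> snd q"
      if "p \<in> As" "q \<in> As" "p \<noteq> q" for p q
      using bspec[OF bspec[OF conjunct1[OF conjunct2[OF AO]] that(1)] that(2)] that(3) by simp
    have ok3: "\<not> (c < e \<and> e < d \<and> d < f)" if "(c,d) \<in> As" "(e,f) \<in> As" for c d e f
    proof -
      have "\<forall>(e,f)\<in>As. \<not> (c < e \<and> e < d \<and> d < f)" using bspec[OF conjunct2[OF conjunct2[OF AO]] that(1)] by simp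
      from bspec[OF this that(2)] show ?thesis by simp
    qed
    define L where "L = Max ((\<lambda>p. snd p - fst p) ` As)"
    have "L \<in> (\<lambda>p. snd p - fst p) ` As" unfolding L_def using less.prems(1) False by (intro Max_in) auto
    then obtain a b where abA: "(a,b) \<in> As" and Lab: "L = b - a" by auto
    have maxl: "\<And>c d. (c,d) \<in> As \<Longrightarrow> d - c \<le> b - a"
      using less.prems(1) Lab unfolding L_def by (metis (no_types, lifting) Max_ge finite_imageI fst_conv image_eqI snd_conv)
    have ab: "a < b" "a \<in> S" "b \<in> S" "even (card (Sin a b S))" using ok1[OF abA] by auto
    define Ain where "Ain = {p\<in>As. a < fst p \<and> fst p < b}"
    define Aout where "Aout = {p\<in>As. fst p < a \<or> b < fst p}"
    have other: "fst p \<noteq> a \<and> fst p \<noteq> b \<and> snd p \<noteq> a \<and> snd p \<noteq> b" if "p \<in> As" "p \<noteq> (a,b)" for p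
      using ok2[OF that(1) abA that(2)] by simp
    have Aeq: "As = insert (a,b) (Ain \<union> Aout)"
    proof
      show "As \<subseteq> insert (a,b) (Ain \<union> Aout)"
      proof
        fix p assume p: "p \<in> As"
        show "p \<in> insert (a,b) (Ain \<union> Aout)"
        proof (cases "p = (a,b)")
          case False then show ?thesis using other[OF p False] p unfolding Ain_def Aout_def by auto
        qed simp
      qed
    qed (use abA in \<open>auto simp: Ain_def Aout_def\<close>)
    have nab: "(a,b) \<notin> Ain \<union> Aout" unfolding Ain_def Aout_def using ab by auto
    have dio: "Ain \<inter> Aout = {}" unfolding Ain_def Aout_def by auto
    have finio: "finite Ain" "finite Aout" using less.prems(1) unfolding Ain_def Aout_def by auto
    have in_d: "a < c \<and> c < b \<and> a < d \<and> d < b" if "(c,d) \<in> Ain" for c d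
    proof -
      have cd: "(c,d) \<in> As" "a < c" "c < b" using that unfolding Ain_def by auto
      have ne: "(c,d) \<noteq> (a,b)" using cd by auto
      have "c < d" using ok1[OF cd(1)] by simp
      moreover have "d \<noteq> b" using other[OF cd(1) ne] by simp
      moreover have "\<not> b < d" using ok3[OF abA cd(1)] cd by auto
      ultimately show ?thesis using cd by auto
    qed
    have out_d: "(c < a \<and> d < a) \<or> (b < c \<and> b < d)" if "(c,d) \<in> Aout" for c d
    proof -
      have cd: "(c,d) \<in> As" "c < a \<or> b < c" using that unfolding Aout_def by auto
      have ne: "(c,d) \<noteq> (a,b)" using cd ab by auto
      have lt: "c < d" using ok1[OF cd(1)] by simp
      have "d \<noteq> b" "d \<noteq> a" using other[OF cd(1) ne] by simp_all
      moreover have "\<not> (c < a \<and> a < d \<and> d < b)" using ok3[OF cd(1) abA] by auto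
      moreover have "\<not> (c < a \<and> b < d)" using maxl[OF cd(1)] ab by auto
      ultimately show ?thesis using cd lt by auto
    qed
    have finin: "finite (Sin a b S)" "finite (Sout a b S)" using less.prems(2) by (auto simp: Sin_def Sout_def)
    have cs: "card S = card (Sin a b S) + card (Sout a b S) + 2" by (rule Sin_Sout_card[OF less.prems(2) ab(1-3)])
    have evout: "even (card (Sout a b S))" using cs less.prems(3) ab(4) by simp
    have okin: "arcs_ok (Sin a b S) Ain"
      unfolding arcs_ok_def
    proof (intro conjI)
      show "\<forall>(c,d)\<in>Ain. c < d \<and> c \<in> Sin a b S \<and> d \<in> Sin a b S \<and> even (card (Sin c d (Sin a b S)))"
      proof (clarify)
        fix c d assume cd: "(c,d) \<in> Ain"
        have A: "(c,d) \<in> As" using cd unfolding Ain_def by simp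
        have "Sin c d (Sin a b S) = Sin c d S" using in_d[OF cd] unfolding Sin_def by auto
        then show "c < d \<and> c \<in> Sin a b S \<and> d \<in> Sin a b S \<and> even (card (Sin c d (Sin a b S)))"
          using ok1[OF A] in_d[OF cd] unfolding Sin_def by auto
      qed
      show "\<forall>p\<in>Ain. \<forall>q\<in>Ain. p \<noteq> q \<longrightarrow> fst p \<noteq> fst q \<and> fst p \<noteq> snd q \<and> snd p \<noteq> fst q \<and> snd p \<noteq> snd q"
        using ok2 unfolding Ain_def by blast
      show "\<forall>(c,d)\<in>Ain. \<forall>(e,f)\<in>Ain. \<not> (c < e \<and> e < d \<and> d < f)"
        using ok3 unfolding Ain_def by blast
    qed
    have okout: "arcs_ok (Sout a b S) Aout"
      unfolding arcs_ok_def
    proof (intro conjI)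
      show "\<forall>(c,d)\<in>Aout. c < d \<and> c \<in> Sout a b S \<and> d \<in> Sout a b S \<and> even (card (Sin c d (Sout a b S)))"
      proof (clarify)
        fix c d assume cd: "(c,d) \<in> Aout"
        have A: "(c,d) \<in> As" using cd unfolding Aout_def by simp
        have "Sin c d (Sout a b S) = Sin c d S" using out_d[OF cd] unfolding Sin_def Sout_def by auto
        then show "c < d \<and> c \<in> Sout a b S \<and> d \<in> Sout a b S \<and> even (card (Sin c d (Sout a b S)))"
          using ok1[OF A] out_d[OF cd] unfolding Sout_def by auto
      qed
      show "\<forall>p\<in>Aout. \<forall>q\<in>Aout. p \<noteq> q \<longrightarrow> fst p \<noteq> fst q \<and> fst p \<noteq> snd q \<and> snd p \<noteq> fst q \<and> snd p \<noteq> snd q"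
        using ok2 unfolding Aout_def by blast
      show "\<forall>(c,d)\<in>Aout. \<forall>(e,f)\<in>Aout. \<not> (c < e \<and> e < d \<and> d < f)"
        using ok3 unfolding Aout_def by blast
    qed
    have cardlt: "card Ain < card As" "card Aout < card As"
    proof -
      have "Ain \<subset> As" "Aout \<subset> As" using Aeq nab by auto
      then show "card Ain < card As" "card Aout < card As" using less.prems(1) by (auto intro: psubset_card_mono)
    qed
    have IHin: "real (card (FF (Sin a b S) Ain)) \<ge> real (card (ncm (Sin a b S))) * (\<Prod>p\<in>Ain. arcw p)"
      using less.hyps[OF cardlt(1) finio(1) finin(1) ab(4) okin] .
    have IHout: "real (card (FF (Sout a b S) Aout)) \<ge> real (card (ncm (Sout a b S))) * (\<Prod>p\<in>Aout. arcw p)"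
      using less.hyps[OF cardlt(2) finio(2) finin(2) evout okout] .
    have Ain_c: "\<forall>p\<in>Ain. a < fst p \<and> fst p < b" unfolding Ain_def by auto
    have Aout_c: "\<forall>p\<in>Aout. fst p < a \<or> b < fst p" unfolding Aout_def by auto
    have e1: "real (card (FF S As)) = real (card (FF (Sin a b S) Ain)) * real (card (FF (Sout a b S) Aout))"
      using split_card[OF ab(1-3) Ain_c Aout_c] Aeq by simp
    have e2: "real (card (FF S {(a,b)})) = real (card (ncm (Sin a b S))) * real (card (ncm (Sout a b S)))"
      using split_card[OF ab(1-3), of "{}" "{}"] by (simp add: FF_empty)
    have pe: "(\<Prod>p\<in>As. arcw p) = arcw (a,b) * ((\<Prod>p\<in>Ain. arcw p) * (\<Prod>p\<in>Aout. arcw p))"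
      using Aeq nab finio dio by (simp add: prod.union_disjoint)
    have pin: "(\<Prod>p\<in>Ain. arcw p) \<ge> 0" "(\<Prod>p\<in>Aout. arcw p) \<ge> 0"
      by (simp_all add: prod_nonneg arcw_nonneg)
    have "real (card (ncm S)) * (\<Prod>p\<in>As. arcw p)
        = (real (card (ncm S)) * arcw (a,b)) * ((\<Prod>p\<in>Ain. arcw p) * (\<Prod>p\<in>Aout. arcw p))"
      by (simp add: pe)
    also have "\<dots> \<le> real (card (FF S {(a,b)})) * ((\<Prod>p\<in>Ain. arcw p) * (\<Prod>p\<in>Aout. arcw p))"
      using one_arc[OF less.prems(2,3) ab] pin by (intro mult_right_mono) auto
    also have "\<dots> = (real (card (ncm (Sin a b S))) * (\<Prod>p\<in>Ain. arcw p)) * (real (card (ncm (Sout a b S))) * (\<Prod>p\<in>Aout. arcw p))"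
      by (simp add: e2)
    also have "\<dots> \<le> real (card (FF (Sin a b S) Ain)) * real (card (FF (Sout a b S) Aout))"
      using IHin IHout pin by (intro mult_mono) (auto)
    also have "\<dots> = real (card (FF S As))" using e1 by simp
    finally show ?thesis .
  qed
qed


definition flip :: "'a \<Rightarrow> 'a set \<Rightarrow> 'a set" where
  "flip x R = (if x \<in> R then R - {x} else insert x R)"

lemma flip_flip: "flip x (flip x R) = R" by (auto simp: flip_def)

lemma flip_other: "x \<notin> T \<Longrightarrow> flip x R \<inter> T = R \<inter> T" by (auto simp: flip_def)

lemma flip_par: assumes "finite R" "x \<in> T" shows "even (card (flip x R \<inter> T)) \<longleftrightarrow> \<not> even (card (R \<inter> T))"
proof (cases "x \<in> R")
  case True
  then have "flip x R \<inter> T = (R \<inter> T) - {x}" by (auto simp: flip_def)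
  moreover have "x \<in> R \<inter> T" using True assms by auto
  moreover have "finite (R \<inter> T)" using assms by auto
  ultimately have "Suc (card (flip x R \<inter> T)) = card (R \<inter> T)"
    using card_Suc_Diff1[of "R \<inter> T" x] by simp
  then show ?thesis by (metis even_Suc)
next
  case False
  then have "flip x R \<inter> T = insert x (R \<inter> T)" using assms by (auto simp: flip_def)
  moreover have "x \<notin> R \<inter> T" using False by auto
  moreover have "finite (R \<inter> T)" using assms by auto
  ultimately have "card (flip x R \<inter> T) = card (R \<inter> T) + 1" by simp
  then show ?thesis by simp
qed

lemma flip_sub: "x \<in> V \<Longrightarrow> R \<subseteq> V \<Longrightarrow> flip x R \<subseteq> V" by (auto simp: flip_def)

definition Csets :: "'a set \<Rightarrow> 'i set \<Rightarrow> ('i \<Rightarrow> 'a set) \<Rightarrow> ('i \<Rightarrow> bool) \<Rightarrow> 'a set set" where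
  "Csets V I T c = {R. R \<subseteq> V \<and> (\<forall>i\<in>I. even (card (R \<inter> T i)) = c i)}"

lemma pivot_count:
  fixes ord :: "'i \<Rightarrow> nat"
  assumes "finite V" "finite I" "\<forall>i\<in>I. T i \<subseteq> V \<and> p i \<in> T i"
    and "\<forall>i\<in>I. \<forall>j\<in>I. i \<noteq> j \<and> ord i \<le> ord j \<longrightarrow> p i \<notin> T j"
  shows "card (Csets V I T c) * 2 ^ card I = 2 ^ card V"
  using assms
proof (induction "card I" arbitrary: I rule: less_induct)
  case less
  show ?case
  proof (cases "I = {}")
    case True
    then have "Csets V I T c = Pow V" by (auto simp: Csets_def)
    then show ?thesis using True less.prems by (simp add: card_Pow)
  next
    case False
    define m where "m = Min (ord ` I)"
    have "m \<in> ord ` I" unfolding m_def using False less.prems by (intro Min_in) auto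
    then obtain i0 where i0: "i0 \<in> I" "ord i0 = m" by auto
    have i0min: "ord i0 \<le> ord j" if "j \<in> I" for j
      unfolding i0(2) m_def using less.prems(2) that by (intro Min_le) auto
    define I' where "I' = I - {i0}"
    have cI: "card I = Suc (card I')" using i0 less.prems(2) unfolding I'_def by (metis card_Suc_Diff1)
    have IH: "card (Csets V I' T c) * 2 ^ card I' = 2 ^ card V"
    proof (rule less.hyps)
      show "card I' < card I" using cI by simp
      show "finite V" using less.prems(1) .
      show "finite I'" using less.prems(2) unfolding I'_def by simp
      show "\<forall>i\<in>I'. T i \<subseteq> V \<and> p i \<in> T i" using less.prems(3) unfolding I'_def by blast
      show "\<forall>i\<in>I'. \<forall>j\<in>I'. i \<noteq> j \<and> ord i \<le> ord j \<longrightarrow> p i \<notin> T j" using less.prems(4) unfolding I'_def by blast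
    qed
    have pT: "p i0 \<in> T i0" "p i0 \<in> V" using less.prems i0 by auto
    have pO: "p i0 \<notin> T j" if "j \<in> I'" for j
    proof -
      have "j \<in> I" "i0 \<noteq> j" using that unfolding I'_def by auto
      then show ?thesis using less.prems(4) i0(1) i0min[of j] by blast
    qed
    define A where "A = Csets V I T c"
    define B where "B = {R \<in> Csets V I' T c. even (card (R \<inter> T i0)) \<noteq> c i0}"
    have split: "Csets V I' T c = A \<union> B" "A \<inter> B = {}"
    proof -
      have "I = insert i0 I'" using i0 unfolding I'_def by auto
      then show "Csets V I' T c = A \<union> B" "A \<inter> B = {}"
        unfolding A_def B_def Csets_def by auto
    qed
    have fin: "finite (Csets V I' T c)" unfolding Csets_def using less.prems by simp
    have "flip (p i0) ` A = B"
    proof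
      show "flip (p i0) ` A \<subseteq> B"
      proof
        fix R' assume "R' \<in> flip (p i0) ` A"
        then obtain R where R: "R \<in> A" "R' = flip (p i0) R" by auto
        have fR: "finite R" using R less.prems unfolding A_def Csets_def by (auto intro: finite_subset)
        have RA: "R \<subseteq> V" "\<And>i. i \<in> I \<Longrightarrow> even (card (R \<inter> T i)) = c i" using R(1) unfolding A_def Csets_def by auto
        have "R' \<subseteq> V" using flip_sub[OF pT(2) RA(1)] R(2) by simp
        moreover have "even (card (R' \<inter> T i)) = c i" if "i \<in> I'" for i
        proof -
          have "R' \<inter> T i = R \<inter> T i" using flip_other[OF pO[OF that]] R(2) by simp
          then show ?thesis using RA(2)[of i] that unfolding I'_def by simp
        qed
        moreover have "even (card (R' \<inter> T i0)) \<noteq> c i0" using flip_par[OF fR pT(1)] R(2) RA(2)[OF i0(1)] by simp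
        ultimately show "R' \<in> B" unfolding B_def Csets_def by blast
      qed
      show "B \<subseteq> flip (p i0) ` A"
      proof
        fix R assume R: "R \<in> B"
        have fR: "finite R" using R less.prems unfolding B_def Csets_def by (auto intro: finite_subset)
        have RB: "R \<subseteq> V" "\<And>i. i \<in> I' \<Longrightarrow> even (card (R \<inter> T i)) = c i" "even (card (R \<inter> T i0)) \<noteq> c i0"
          using R unfolding B_def Csets_def by auto
        let ?R' = "flip (p i0) R"
        have "?R' \<subseteq> V" using flip_sub[OF pT(2) RB(1)] by simp
        moreover have "even (card (?R' \<inter> T i)) = c i" if "i \<in> I" for i
        proof (cases "i = i0")
          case True then show ?thesis using flip_par[OF fR pT(1)] RB(3) by simp
        next
          case False
          then have iI: "i \<in> I'" using that unfolding I'_def by simp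
          have "?R' \<inter> T i = R \<inter> T i" using flip_other[OF pO[OF iI]] by simp
          then show ?thesis using RB(2)[OF iI] by simp
        qed
        ultimately have "flip (p i0) R \<in> A" unfolding A_def Csets_def by blast
        moreover have "R = flip (p i0) (flip (p i0) R)" by (simp add: flip_flip)
        ultimately show "R \<in> flip (p i0) ` A" by blast
      qed
    qed
    moreover have "inj_on (flip (p i0)) A" by (metis flip_flip inj_onI)
    ultimately have cAB: "card B = card A" using card_image by blast
    have "card (Csets V I' T c) = card A + card B"
      using split fin by (simp add: card_Un_disjoint)
    then have "card (Csets V I' T c) = 2 * card A" using cAB by simp
    then show ?thesis using IH cI unfolding A_def by (simp add: mult.assoc mult.commute[of 2])
  qed
qed


definition dist2 :: "nat \<Rightarrow> nat \<Rightarrow> bool" where "dist2 u v \<longleftrightarrow> u + 2 \<le> v \<or> v + 2 \<le> u"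

locale GQ =
  fixes n :: nat and xs ks ys ls :: "nat list"
  assumes good: "good n xs ks ys ls"
begin

abbreviation "sN \<equiv> length xs"
abbreviation "tN \<equiv> length ys"

definition E :: "nat list" where "E = xs @ map2 (+) xs ks @ ys @ map2 (+) ys ls"

lemmas gg = good[unfolded good_def]
lemma g1: "length ks = length xs" using gg by (rule conjunct1)
lemma g2: "length ls = length ys" using gg by (elim conjE)
lemma g6: "\<forall>i<length xs. 1 \<le> xs!i \<and> xs!i < xs!i + ks!i \<and> xs!i + ks!i \<le> 2*n" using gg by (elim conjE)
lemma g7: "\<forall>j<length ys. 1 \<le> ys!j \<and> ys!j < ys!j + ls!j \<and> ys!j + ls!j \<le> 2*n" using gg by (elim conjE)
lemma g8: "let E = xs @ map2 (+) xs ks @ ys @ map2 (+) ys ls in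
        \<forall>i<length E. \<forall>j<length E. i \<noteq> j \<longrightarrow> E!i + 2 \<le> E!j \<or> E!j + 2 \<le> E!i" using gg by (elim conjE)
lemma g9: "\<not> (\<exists>i<length xs. \<exists>j<length xs. i \<noteq> j \<and>
          xs!i < xs!j \<and> xs!j < xs!i + ks!i \<and> xs!i + ks!i < xs!j + ks!j)" using gg by (elim conjE)
lemma g10: "\<not> (\<exists>i<length ys. \<exists>j<length ys. i \<noteq> j \<and>
          ys!i < ys!j \<and> ys!j < ys!i + ls!i \<and> ys!i + ls!i < ys!j + ls!j)" using gg by (elim conjE)

lemma lens: "length ks = sN" "length ls = tN" using g1 g2 by auto

lemma E_len: "length E = 2* sN + 2* tN" using lens unfolding E_def by simp

lemma E_dist: "i < length E \<Longrightarrow> j < length E \<Longrightarrow> i \<noteq> j \<Longrightarrow> dist2 (E!i) (E!j)"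
proof -
  assume a: "i < length E" "j < length E" "i \<noteq> j"
  have "\<forall>i<length E. \<forall>j<length E. i \<noteq> j \<longrightarrow> E!i + 2 \<le> E!j \<or> E!j + 2 \<le> E!i"
    using g8 unfolding E_def Let_def .
  then show ?thesis using a unfolding dist2_def by blast
qed

lemma E_nth:
  "i < sN \<Longrightarrow> E!i = xs!i"
  "i < sN \<Longrightarrow> E!(sN+i) = xs!i + ks!i"
  "j < tN \<Longrightarrow> E!(2* sN+j) = ys!j"
  "j < tN \<Longrightarrow> E!(2* sN+tN+j) = ys!j + ls!j"
  using lens unfolding E_def by (auto simp: nth_append)

definition U :: "(nat \<times> nat \<times> bool) list" where
  "U = map (\<lambda>i. (xs!i, xs!i+ks!i, True)) [0..<sN] @ map (\<lambda>j. (ys!j, ys!j+ls!j, False)) [0..<tN]"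

definition slA :: "nat \<Rightarrow> nat" where "slA q = (if q < sN then q else 2* sN + (q - sN))"
definition slB :: "nat \<Rightarrow> nat" where "slB q = (if q < sN then sN + q else 2* sN + tN + (q - sN))"

lemma U_len: "length U = sN + tN" unfolding U_def by simp

lemma slE_x: assumes "q < sN" shows "E!(slA q) = xs!q" "E!(slB q) = xs!q + ks!q"
proof -
  have e: "slA q = q" "slB q = sN + q" using assms by (auto simp: slA_def slB_def)
  show "E!(slA q) = xs!q" unfolding e(1) by (rule E_nth(1)[OF assms])
  show "E!(slB q) = xs!q + ks!q" unfolding e(2) by (rule E_nth(2)[OF assms])
qed

lemma slE_y: assumes "q < length U" "\<not> q < sN" shows "E!(slA q) = ys!(q-sN)" "E!(slB q) = ys!(q-sN) + ls!(q-sN)"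
proof -
  have j: "q - sN < tN" using assms U_len by simp
  have e: "slA q = 2 * sN + (q - sN)" "slB q = 2 * sN + tN + (q - sN)" using assms by (auto simp: slA_def slB_def)
  show "E!(slA q) = ys!(q-sN)" unfolding e(1) by (rule E_nth(3)[OF j])
  show "E!(slB q) = ys!(q-sN) + ls!(q-sN)" unfolding e(2) by (rule E_nth(4)[OF j])
qed

lemma U_nth: "q < length U \<Longrightarrow> U!q = (E!(slA q), E!(slB q), q < sN)"
proof -
  assume q: "q < length U"
  show ?thesis
  proof (cases "q < sN")
    case True then show ?thesis using slE_x[OF True] unfolding U_def by (simp add: nth_append)
  next
    case False
    then have j: "q - sN < tN" using q U_len by simp
    then have "[0..<tN] ! (q - sN) = q - sN" by simp
    then show ?thesis using slE_y[OF q False] q j False unfolding U_def by (simp add: nth_append)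
  qed
qed

lemma sl_bounds: "q < length U \<Longrightarrow> slA q < length E \<and> slB q < length E"
  unfolding slA_def slB_def E_len U_len by auto

lemma sl_inj:
  "q < length U \<Longrightarrow> r < length U \<Longrightarrow> slA q = slA r \<Longrightarrow> q = r"
  "q < length U \<Longrightarrow> r < length U \<Longrightarrow> slB q = slB r \<Longrightarrow> q = r"
  "q < length U \<Longrightarrow> r < length U \<Longrightarrow> slA q \<noteq> slB r"
  unfolding slA_def slB_def U_len by (auto split: if_splits)

lemma U_dist:
  assumes "q < length U" "r < length U" "q \<noteq> r"
  shows "dist2 (E!(slA q)) (E!(slA r))" "dist2 (E!(slA q)) (E!(slB r))"
        "dist2 (E!(slB q)) (E!(slA r))" "dist2 (E!(slB q)) (E!(slB r))"
proof -
  have b: "slA q < length E" "slB q < length E" "slA r < length E" "slB r < length E"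
    using sl_bounds assms by auto
  have d: "slA q \<noteq> slA r" "slA q \<noteq> slB r" "slB q \<noteq> slA r" "slB q \<noteq> slB r"
    using sl_inj[OF assms(1,2)] sl_inj(3)[OF assms(2,1)] assms(3) by auto
  show "dist2 (E!(slA q)) (E!(slA r))" by (rule E_dist[OF b(1) b(3) d(1)])
  show "dist2 (E!(slA q)) (E!(slB r))" by (rule E_dist[OF b(1) b(4) d(2)])
  show "dist2 (E!(slB q)) (E!(slA r))" by (rule E_dist[OF b(2) b(3) d(3)])
  show "dist2 (E!(slB q)) (E!(slB r))" by (rule E_dist[OF b(2) b(4) d(4)])
qed

lemma U_self: "q < length U \<Longrightarrow> dist2 (E!(slA q)) (E!(slB q))"
proof -
  assume q: "q < length U"
  show ?thesis using E_dist[of "slA q" "slB q"] sl_bounds[OF q] sl_inj(3)[OF q q] by blast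
qed

lemma U_range: "q < length U \<Longrightarrow> 1 \<le> E!(slA q) \<and> E!(slA q) < E!(slB q) \<and> E!(slB q) \<le> 2*n"
proof -
  assume q: "q < length U"
  show ?thesis
  proof (cases "q < sN")
    case True
    then show ?thesis using g6 slE_x[OF True] by auto
  next
    case False
    then have j: "q - sN < tN" using q U_len by simp
    then show ?thesis using g7 slE_y[OF q False] by auto
  qed
qed

lemma U_nocross:
  assumes "q < length U" "r < length U" "q \<noteq> r" "(q < sN) = (r < sN)"
  shows "\<not> (E!(slA q) < E!(slA r) \<and> E!(slA r) < E!(slB q) \<and> E!(slB q) < E!(slB r))"
proof (cases "q < sN")
  case True
  then have "r < sN" using assms by simp
  have "\<not> (xs!q < xs!r \<and> xs!r < xs!q + ks!q \<and> xs!q + ks!q < xs!r + ks!r)"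
    using g9 True \<open>r < sN\<close> assms(3) by blast
  then show ?thesis using slE_x[OF True] slE_x[OF \<open>r < sN\<close>] by simp
next
  case False
  then have r: "\<not> r < sN" using assms by simp
  have j: "q - sN < tN" "r - sN < tN" "q - sN \<noteq> r - sN" using assms False r U_len by auto
  have "\<not> (ys!(q-sN) < ys!(r-sN) \<and> ys!(r-sN) < ys!(q-sN) + ls!(q-sN) \<and> ys!(q-sN) + ls!(q-sN) < ys!(r-sN) + ls!(r-sN))"
    using g10 j by blast
  then show ?thesis using slE_y[OF assms(1) False] slE_y[OF assms(2) r] by simp
qed

end

datatype cidx = CArc nat nat bool | CEnd nat bool | CTot

context GQ begin

definition V :: "nat set" where "V = {1..2*n}"
definition Arcs :: "(nat \<times> nat \<times> bool) set" where "Arcs = set U"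

lemma Arcs_ex: "\<alpha> \<in> Arcs \<Longrightarrow> \<exists>q<length U. \<alpha> = U!q"
  unfolding Arcs_def by (metis in_set_conv_nth)

lemma A1: "(a,b,col) \<in> Arcs \<Longrightarrow> 1 \<le> a \<and> a < b \<and> b \<le> 2*n \<and> dist2 a b"
proof -
  assume "(a,b,col) \<in> Arcs"
  then obtain q where q: "q < length U" "(a,b,col) = U!q" using Arcs_ex by blast
  then show ?thesis using U_nth[OF q(1)] U_range[OF q(1)] U_self[OF q(1)] by simp
qed

lemma A2:
  assumes "(a,b,col) \<in> Arcs" "(a',b',col') \<in> Arcs" "(a,b,col) \<noteq> (a',b',col')"
  shows "dist2 a a'" "dist2 a b'" "dist2 b a'" "dist2 b b'"
proof -
  obtain q where q: "q < length U" "(a,b,col) = U!q" using Arcs_ex assms(1) by blast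
  obtain r where r: "r < length U" "(a',b',col') = U!r" using Arcs_ex assms(2) by blast
  have "q \<noteq> r" using q r assms(3) by auto
  then show "dist2 a a'" "dist2 a b'" "dist2 b a'" "dist2 b b'"
    using U_dist[OF q(1) r(1)] U_nth[OF q(1)] U_nth[OF r(1)] q r by auto
qed

lemma A3:
  assumes "(a,b,col) \<in> Arcs" "(a',b',col) \<in> Arcs"
  shows "\<not> (a < a' \<and> a' < b \<and> b < b')"
proof -
  obtain q where q: "q < length U" "(a,b,col) = U!q" using Arcs_ex assms(1) by blast
  obtain r where r: "r < length U" "(a',b',col) = U!r" using Arcs_ex assms(2) by blast
  show ?thesis
  proof (cases "q = r")
    case True
    then have "(a,b,col) = (a',b',col)" using q r by simp
    then show ?thesis by simp
  next
    case False
    have "(q < sN) = (r < sN)" using q r U_nth[OF q(1)] U_nth[OF r(1)] by auto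
    then show ?thesis using U_nocross[OF q(1) r(1) False] U_nth[OF q(1)] U_nth[OF r(1)] q r by auto
  qed
qed

lemma dist2_ne: "dist2 u v \<Longrightarrow> u \<noteq> v" by (auto simp: dist2_def)

definition arcOK :: "nat set \<Rightarrow> nat \<times> nat \<times> bool \<Rightarrow> bool" where
  "arcOK R \<alpha> = (case \<alpha> of (a,b,col) \<Rightarrow>
     (if col then a \<in> R \<and> b \<in> R \<and> even (card {z\<in>R. a < z \<and> z < b})
      else a \<in> V - R \<and> b \<in> V - R \<and> even (card {z\<in>V - R. a < z \<and> z < b})))"

definition Good :: "nat set set" where
  "Good = {R. R \<subseteq> V \<and> even (card R) \<and> (\<forall>\<alpha>\<in>Arcs. arcOK R \<alpha>)}"

definition cT :: "nat set \<Rightarrow> cidx \<Rightarrow> nat set" where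
  "cT Tt i = (case i of CArc a b col \<Rightarrow> {a<..<b} | CEnd e col \<Rightarrow> {e} | CTot \<Rightarrow> Tt)"
definition cC :: "bool \<Rightarrow> cidx \<Rightarrow> bool" where
  "cC ct i = (case i of CArc a b col \<Rightarrow> (col \<or> even (b - a - 1)) | CEnd e col \<Rightarrow> \<not> col | CTot \<Rightarrow> ct)"
definition cP :: "nat \<Rightarrow> cidx \<Rightarrow> nat" where
  "cP pt i = (case i of CArc a b col \<Rightarrow> a + 1 | CEnd e col \<Rightarrow> e | CTot \<Rightarrow> pt)"
definition cO :: "nat \<Rightarrow> cidx \<Rightarrow> nat" where
  "cO ot i = (case i of CArc a b col \<Rightarrow> a | CEnd e col \<Rightarrow> 2*n + 1 + e | CTot \<Rightarrow> ot)"

definition I0 :: "cidx set" where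
  "I0 = (\<lambda>(a,b,col). CArc a b col) ` Arcs \<union> (\<lambda>(a,b,col). CEnd a col) ` Arcs \<union> (\<lambda>(a,b,col). CEnd b col) ` Arcs"

lemma finite_Arcs: "finite Arcs" unfolding Arcs_def by simp
lemma card_Arcs: "card Arcs \<le> sN + tN" unfolding Arcs_def using card_length[of U] U_len by simp

lemma finite_I0: "finite I0" unfolding I0_def using finite_Arcs by simp

lemma card_I0: "card I0 \<le> 3 * (sN + tN)"
proof -
  have "card I0 \<le> card ((\<lambda>(a,b,col). CArc a b col) ` Arcs) + card ((\<lambda>(a,b,col). CEnd a col) ` Arcs) + card ((\<lambda>(a,b,col). CEnd b col) ` Arcs)"
    unfolding I0_def by (meson card_Un_le le_trans add_le_mono order_refl)
  also have "\<dots> \<le> card Arcs + card Arcs + card Arcs" by (intro add_mono card_image_le finite_Arcs)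
  finally show ?thesis using card_Arcs by simp
qed

lemma endpoint_arc: "CEnd e col \<in> I0 \<Longrightarrow> \<exists>a b. (a,b,col) \<in> Arcs \<and> (e = a \<or> e = b)"
  unfolding I0_def by auto

lemma CTot_notin: "CTot \<notin> I0" unfolding I0_def by auto

lemma piv_conds:
  assumes It: "It = {CTot} \<or> It = {}"
    and Tt0: "It = {CTot} \<Longrightarrow> Tt \<subseteq> V \<and> pt \<in> Tt \<and> ot \<le> 2*n"
    and HA0: "\<And>a b col. It = {CTot} \<Longrightarrow> (a,b,col) \<in> Arcs \<Longrightarrow> a \<le> ot \<Longrightarrow> a + 1 \<notin> Tt"
    and HB0: "\<And>a b col. It = {CTot} \<Longrightarrow> (a,b,col) \<in> Arcs \<Longrightarrow> ot \<le> a \<Longrightarrow> pt \<notin> {a<..<b}"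
    and HC0: "\<And>a b col. It = {CTot} \<Longrightarrow> (a,b,col) \<in> Arcs \<Longrightarrow> pt \<noteq> a \<and> pt \<noteq> b"
  shows "\<forall>i\<in>I0 \<union> It. cT Tt i \<subseteq> V \<and> cP pt i \<in> cT Tt i"
    and "\<forall>i\<in>I0 \<union> It. \<forall>j\<in>I0 \<union> It. i \<noteq> j \<and> cO ot i \<le> cO ot j \<longrightarrow> cP pt i \<notin> cT Tt j"
proof -
  have Itc: "It = {CTot}" if "CTot \<in> I0 \<union> It" using It CTot_notin that by auto
  have Tt: "Tt \<subseteq> V" "pt \<in> Tt" "ot \<le> 2*n" if "CTot \<in> I0 \<union> It" using Tt0[OF Itc[OF that]] by auto
  have HA: "\<And>a b col. (a,b,col) \<in> Arcs \<Longrightarrow> a \<le> ot \<Longrightarrow> a + 1 \<notin> Tt" if "CTot \<in> I0 \<union> It"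
    using HA0[OF Itc[OF that]] by blast
  have HB: "\<And>a b col. (a,b,col) \<in> Arcs \<Longrightarrow> ot \<le> a \<Longrightarrow> pt \<notin> {a<..<b}" if "CTot \<in> I0 \<union> It"
    using HB0[OF Itc[OF that]] by blast
  have HC: "\<And>a b col. (a,b,col) \<in> Arcs \<Longrightarrow> pt \<noteq> a \<and> pt \<noteq> b" if "CTot \<in> I0 \<union> It"
    using HC0[OF Itc[OF that]] by blast
  show "\<forall>i\<in>I0 \<union> It. cT Tt i \<subseteq> V \<and> cP pt i \<in> cT Tt i"
  proof
    fix i assume i: "i \<in> I0 \<union> It"
    show "cT Tt i \<subseteq> V \<and> cP pt i \<in> cT Tt i"
    proof (cases i)
      case (CArc a b col)
      then have "(a,b,col) \<in> Arcs" using i It unfolding I0_def by auto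
      then show ?thesis using A1[of a b col] CArc unfolding cT_def cP_def V_def dist2_def by auto
    next
      case (CEnd e col)
      have "CEnd e col \<in> I0" using i It CEnd by auto
      then obtain a b where "(a,b,col) \<in> Arcs" "e = a \<or> e = b" using endpoint_arc by blast
      then show ?thesis using A1[of a b col] CEnd unfolding cT_def cP_def V_def by auto
    next
      case CTot then show ?thesis using Tt i unfolding cT_def cP_def by simp
    qed
  qed
  show "\<forall>i\<in>I0 \<union> It. \<forall>j\<in>I0 \<union> It. i \<noteq> j \<and> cO ot i \<le> cO ot j \<longrightarrow> cP pt i \<notin> cT Tt j"
  proof (intro ballI impI)
    fix i j assume i: "i \<in> I0 \<union> It" and j: "j \<in> I0 \<union> It" and ij: "i \<noteq> j \<and> cO ot i \<le> cO ot j"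
    show "cP pt i \<notin> cT Tt j"
    proof (cases i)
      case (CArc a b col)
      then have ia: "(a,b,col) \<in> Arcs" using i It unfolding I0_def by auto
      have ab: "1 \<le> a" "a + 2 \<le> b" "b \<le> 2*n" using A1[OF ia] unfolding dist2_def by auto
      show ?thesis
      proof (cases j)
        case (CArc a' b' col')
        then have ja: "(a',b',col') \<in> Arcs" using j It unfolding I0_def by auto
        have ne: "(a,b,col) \<noteq> (a',b',col')" using ij CArc \<open>i = CArc a b col\<close> by auto
        have "a \<le> a'" using ij CArc \<open>i = CArc a b col\<close> unfolding cO_def by simp
        then have "a + 2 \<le> a'" using A2(1)[OF ia ja ne] unfolding dist2_def by auto
        then show ?thesis using CArc \<open>i = CArc a b col\<close> unfolding cP_def cT_def by auto
      next
        case (CEnd e col')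
        have "CEnd e col' \<in> I0" using j It CEnd by auto
        then obtain a' b' where ja: "(a',b',col') \<in> Arcs" "e = a' \<or> e = b'" using endpoint_arc by blast
        have "a + 1 \<noteq> e"
        proof (cases "(a,b,col) = (a',b',col')")
          case True then show ?thesis using ja ab by auto
        next
          case False then show ?thesis using A2(1,2)[OF ia ja(1) False] ja(2) unfolding dist2_def by auto
        qed
        then show ?thesis using CEnd \<open>i = CArc a b col\<close> unfolding cP_def cT_def by auto
      next
        case CTot
        then have "a \<le> ot" using ij \<open>i = CArc a b col\<close> unfolding cO_def by simp
        then show ?thesis using HA[OF _ ia] j CTot \<open>i = CArc a b col\<close> unfolding cP_def cT_def by auto
      qed
    next
      case (CEnd e col)
      have "CEnd e col \<in> I0" using i It CEnd by auto
      then obtain a b where ia: "(a,b,col) \<in> Arcs" "e = a \<or> e = b" using endpoint_arc by blast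
      show ?thesis
      proof (cases j)
        case (CArc a' b' col')
        then have ja: "(a',b',col') \<in> Arcs" using j It unfolding I0_def by auto
        then have "a' \<le> 2*n" using A1[OF ja] by simp
        then show ?thesis using ij CArc CEnd unfolding cO_def by simp
      next
        case (CEnd e' col')
        have "CEnd e' col' \<in> I0" using j It CEnd by auto
        then obtain a' b' where ja: "(a',b',col') \<in> Arcs" "e' = a' \<or> e' = b'" using endpoint_arc by blast
        have "e \<noteq> e'"
        proof
          assume ee: "e = e'"
          show False
          proof (cases "(a,b,col) = (a',b',col')")
            case True
            then have "col = col'" by simp
            then show False using ij CEnd \<open>i = CEnd e col\<close> ee by simp
          next
            case False
            then show False using A2[OF ia(1) ja(1) False] ia(2) ja(2) ee dist2_ne by metis
          qed
        qed
        then show ?thesis using CEnd \<open>i = CEnd e col\<close> unfolding cP_def cT_def by auto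
      next
        case CTot
        then show ?thesis using ij CEnd Tt j unfolding cO_def by auto
      qed
    next
      case CTot
      show ?thesis
      proof (cases j)
        case (CArc a' b' col')
        then have ja: "(a',b',col') \<in> Arcs" using j It unfolding I0_def by auto
        have "ot \<le> a'" using ij CArc CTot unfolding cO_def by simp
        then show ?thesis using HB[OF _ ja] i CArc CTot unfolding cP_def cT_def by auto
      next
        case (CEnd e' col')
        have "CEnd e' col' \<in> I0" using j It CEnd by auto
        then obtain a' b' where ja: "(a',b',col') \<in> Arcs" "e' = a' \<or> e' = b'" using endpoint_arc by blast
        then show ?thesis using HC[OF _ ja(1)] i CEnd CTot unfolding cP_def cT_def by auto
      next
        case CTot then show ?thesis using ij \<open>i = CTot\<close> by simp
      qed
    qed
  qed
qed


lemma card_single_R: "card (R \<inter> {a}) = (if a \<in> R then 1 else 0)"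
  by (cases "a \<in> R") auto

lemma csets_arcOK:
  assumes R: "R \<in> Csets V I (cT Tt) (cC ct)" and sub: "I0 \<subseteq> I" and al: "(a,b,col) \<in> Arcs"
  shows "arcOK R (a,b,col)"
proof -
  have RV: "R \<subseteq> V" and C: "\<forall>i\<in>I. even (card (R \<inter> cT Tt i)) = cC ct i" using R unfolding Csets_def by auto
  have ins: "CArc a b col \<in> I" "CEnd a col \<in> I" "CEnd b col \<in> I" using sub al unfolding I0_def by force+
  have c1: "even (card (R \<inter> {a<..<b})) = (col \<or> even (b - a - 1))" using C ins(1) unfolding cT_def cC_def by auto
  have c2: "even (card (R \<inter> {a})) = (\<not> col)" using C ins(2) unfolding cT_def cC_def by auto
  have c3: "even (card (R \<inter> {b})) = (\<not> col)" using C ins(3) unfolding cT_def cC_def by auto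
  have ab: "1 \<le> a" "a < b" "b \<le> 2*n" using A1[OF al] by auto
  have ra: "a \<in> R \<longleftrightarrow> col" using c2 card_single_R[of R a] by (auto split: if_splits)
  have rb: "b \<in> R \<longleftrightarrow> col" using c3 card_single_R[of R b] by (auto split: if_splits)
  have aV: "a \<in> V" "b \<in> V" using ab unfolding V_def by auto
  have e1: "{z\<in>R. a < z \<and> z < b} = R \<inter> {a<..<b}" by auto
  have e2: "{z\<in>V - R. a < z \<and> z < b} = {a<..<b} - R" using ab unfolding V_def by auto
  have cnt: "card {a<..<b} = card ({a<..<b} \<inter> R) + card ({a<..<b} - R)" by (rule card_Int_Diff) simp
  have ci: "card {a<..<b} = b - a - 1" by simp
  have "{a<..<b} \<inter> R = R \<inter> {a<..<b}" by auto
  then have cnt2: "b - a - 1 = card (R \<inter> {a<..<b}) + card ({a<..<b} - R)" using cnt ci by simp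
  show ?thesis
  proof (cases col)
    case True
    then show ?thesis unfolding arcOK_def using ra rb c1 e1 by simp
  next
    case False
    have "even (card ({a<..<b} - R))" using c1 False cnt2 by (metis even_add)
    then show ?thesis unfolding arcOK_def using ra rb False aV e2 by simp
  qed
qed


lemma finite_V: "finite V" unfolding V_def by simp
lemma card_V: "card V = 2*n" unfolding V_def by simp

lemma count_from:
  assumes It: "It = {CTot} \<or> It = {}"
    and Tt0: "It = {CTot} \<Longrightarrow> Tt \<subseteq> V \<and> pt \<in> Tt \<and> ot \<le> 2*n"
    and HA0: "\<And>a b col. It = {CTot} \<Longrightarrow> (a,b,col) \<in> Arcs \<Longrightarrow> a \<le> ot \<Longrightarrow> a + 1 \<notin> Tt"
    and HB0: "\<And>a b col. It = {CTot} \<Longrightarrow> (a,b,col) \<in> Arcs \<Longrightarrow> ot \<le> a \<Longrightarrow> pt \<notin> {a<..<b}"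
    and HC0: "\<And>a b col. It = {CTot} \<Longrightarrow> (a,b,col) \<in> Arcs \<Longrightarrow> pt \<noteq> a \<and> pt \<noteq> b"
    and sub: "Csets V (I0 \<union> It) (cT Tt) (cC ct) \<subseteq> Good"
  shows "real (card Good) * 2^(3*(sN+tN)+1) \<ge> 2^(2*n)"
proof -
  note pc = piv_conds[OF It Tt0 HA0 HB0 HC0]
  have finI: "finite (I0 \<union> It)" using finite_I0 It by auto
  have eq: "card (Csets V (I0 \<union> It) (cT Tt) (cC ct)) * 2 ^ card (I0 \<union> It) = 2 ^ card V"
    by (rule pivot_count[OF finite_V finI pc(1) pc(2)])
  have cI: "card (I0 \<union> It) \<le> 3*(sN+tN)+1"
  proof -
    have "card (I0 \<union> It) \<le> card I0 + card It" by (rule card_Un_le)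
    moreover have "card It \<le> 1" using It by auto
    ultimately show ?thesis using card_I0 by simp
  qed
  have finG: "finite Good" unfolding Good_def using finite_V by (auto intro: finite_subset[of _ "Pow V"])
  have cG: "card (Csets V (I0 \<union> It) (cT Tt) (cC ct)) \<le> card Good" by (rule card_mono[OF finG sub])
  have "(2::nat)^(2*n) = card (Csets V (I0 \<union> It) (cT Tt) (cC ct)) * 2 ^ card (I0 \<union> It)" using eq card_V by simp
  also have "\<dots> \<le> card Good * 2^(3*(sN+tN)+1)"
    using cG cI by (intro mult_mono power_increasing) auto
  finally have "(2::nat)^(2*n) \<le> card Good * 2^(3*(sN+tN)+1)" .
  then have "real ((2::nat)^(2*n)) \<le> real (card Good * 2^(3*(sN+tN)+1))" by (rule of_nat_mono)
  then show ?thesis by simp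
qed

lemma Good_count: "real (card Good) * 2^(3*(sN+tN)+1) \<ge> 2^(2*n)"
proof (cases "n = 0")
  case True
  have "Arcs = {}" using A1 True by fastforce
  have sub: "Csets V (I0 \<union> {}) (cT {}) (cC True) \<subseteq> Good"
    unfolding Csets_def Good_def V_def using True \<open>Arcs = {}\<close> by auto
  show ?thesis by (rule count_from[where It="{}" and pt=0 and ot=0, OF _ _ _ _ _ sub]) auto
next
  case n0: False
  show ?thesis
  proof (cases "\<exists>b col. (1,b,col) \<in> Arcs")
    case False
    have sub: "Csets V (I0 \<union> {CTot}) (cT V) (cC True) \<subseteq> Good"
    proof
      fix R assume R: "R \<in> Csets V (I0 \<union> {CTot}) (cT V) (cC True)"
      have RV: "R \<subseteq> V" using R unfolding Csets_def by auto
      have "even (card (R \<inter> V))" using R unfolding Csets_def cT_def cC_def by auto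
      moreover have "R \<inter> V = R" using RV by auto
      moreover have "\<forall>\<alpha>\<in>Arcs. arcOK R \<alpha>" using csets_arcOK[OF R] by auto
      ultimately show "R \<in> Good" unfolding Good_def using RV by auto
    qed
    show ?thesis
    proof (rule count_from[where It="{CTot}" and Tt=V and pt=1 and ot=0 and ct=True, OF _ _ _ _ _ sub])
      show "V \<subseteq> V \<and> 1 \<in> V \<and> 0 \<le> 2*n" using n0 unfolding V_def by auto
      show "\<And>a b col. (a,b,col) \<in> Arcs \<Longrightarrow> a \<le> 0 \<Longrightarrow> a + 1 \<notin> V" using A1 by fastforce
      show "\<And>a b col. (a,b,col) \<in> Arcs \<Longrightarrow> 0 \<le> a \<Longrightarrow> 1 \<notin> {a<..<b}" using A1 by fastforce
      show "\<And>a b col. (a,b,col) \<in> Arcs \<Longrightarrow> 1 \<noteq> a \<and> 1 \<noteq> b" using A1 False by fastforce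
    qed auto
  next
    case True
    then obtain b0 col0 where A0: "(1,b0,col0) \<in> Arcs" by blast
    have b0: "3 \<le> b0" "b0 \<le> 2*n" using A1[OF A0] unfolding dist2_def by auto
    show ?thesis
    proof (cases "b0 < 2*n")
      case True
      let ?Tt = "V - {1<..<b0}"
      let ?ct = "col0 \<or> even (b0 - 1 - 1)"
      have sub: "Csets V (I0 \<union> {CTot}) (cT ?Tt) (cC ?ct) \<subseteq> Good"
      proof
        fix R assume R: "R \<in> Csets V (I0 \<union> {CTot}) (cT ?Tt) (cC ?ct)"
        have RV: "R \<subseteq> V" using R unfolding Csets_def by auto
        have i0: "CArc 1 b0 col0 \<in> I0" using A0 unfolding I0_def by force
        have p1: "even (card (R \<inter> ?Tt)) = ?ct" using R unfolding Csets_def cT_def cC_def by auto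
        have p2: "even (card (R \<inter> {1<..<b0})) = ?ct" using R i0 unfolding Csets_def cT_def cC_def by auto
        have "card R = card (R \<inter> {1<..<b0}) + card (R - {1<..<b0})"
          using RV finite_V by (intro card_Int_Diff) (auto intro: finite_subset)
        moreover have "R - {1<..<b0} = R \<inter> ?Tt" using RV by auto
        ultimately have "even (card R)" using p1 p2 by auto
        moreover have "\<forall>\<alpha>\<in>Arcs. arcOK R \<alpha>" using csets_arcOK[OF R] by auto
        ultimately show "R \<in> Good" unfolding Good_def using RV by auto
      qed
      show ?thesis
      proof (rule count_from[where It="{CTot}" and Tt="?Tt" and pt="b0+1" and ot=b0 and ct="?ct", OF _ _ _ _ _ sub])
        show "?Tt \<subseteq> V \<and> b0 + 1 \<in> ?Tt \<and> b0 \<le> 2*n" using True b0 unfolding V_def by auto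
        show "a + 1 \<notin> ?Tt" if "(a,b,col) \<in> Arcs" "a \<le> b0" for a b col
        proof (cases "(a,b,col) = (1,b0,col0)")
          case True then show ?thesis using b0 by auto
        next
          case False
          then have "dist2 a b0" using A2(2)[OF that(1) A0] by simp
          then show ?thesis using that(2) A1[OF that(1)] unfolding dist2_def by auto
        qed
        show "b0 + 1 \<notin> {a<..<b}" if "(a,b,col) \<in> Arcs" "b0 \<le> a" for a b col
        proof (cases "(a,b,col) = (1,b0,col0)")
          case True then show ?thesis using b0 that by auto
        next
          case False
          then have "dist2 a b0" using A2(2)[OF that(1) A0] by simp
          then show ?thesis using that(2) unfolding dist2_def by auto
        qed
        show "b0 + 1 \<noteq> a \<and> b0 + 1 \<noteq> b" if "(a,b,col) \<in> Arcs" for a b col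
        proof (cases "(a,b,col) = (1,b0,col0)")
          case True then show ?thesis using b0 by auto
        next
          case False
          then have "dist2 a b0" "dist2 b b0" using A2(2,4)[OF that(1) A0] by simp_all
          then show ?thesis unfolding dist2_def by auto
        qed
      qed auto
    next
      case False
      then have b0e: "b0 = 2*n" using b0 by simp
      have sub: "Csets V (I0 \<union> {}) (cT {}) (cC True) \<subseteq> Good"
      proof
        fix R assume R: "R \<in> Csets V (I0 \<union> {}) (cT {}) (cC True)"
        have RV: "R \<subseteq> V" using R unfolding Csets_def by auto
        have i0: "CArc 1 b0 col0 \<in> I0" "CEnd 1 col0 \<in> I0" "CEnd b0 col0 \<in> I0" using A0 unfolding I0_def by force+
        have p2: "even (card (R \<inter> {1<..<b0}))" using R i0(1) b0e unfolding Csets_def cT_def cC_def by auto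
        have C: "\<forall>i\<in>I0 \<union> {}. even (card (R \<inter> cT {} i)) = cC True i" using R unfolding Csets_def by auto
        have "even (card (R \<inter> {1})) = (\<not> col0)" using bspec[OF C, of "CEnd 1 col0"] i0(2) unfolding cT_def cC_def by simp
        moreover have "even (card (R \<inter> {b0})) = (\<not> col0)" using bspec[OF C, of "CEnd b0 col0"] i0(3) unfolding cT_def cC_def by simp
        ultimately have p3: "even (card (R \<inter> {1})) = even (card (R \<inter> {b0}))" by simp
        have dec: "R = (R \<inter> {1<..<b0}) \<union> ((R \<inter> {1}) \<union> (R \<inter> {b0}))" using RV b0e unfolding V_def by auto
        have "card R = card (R \<inter> {1<..<b0}) + (card (R \<inter> {1}) + card (R \<inter> {b0}))"
        proof -
          have d1: "(R \<inter> {1}) \<inter> (R \<inter> {b0}) = {}" using b0 by auto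
          have "card ((R \<inter> {1}) \<union> (R \<inter> {b0})) = card (R \<inter> {1}) + card (R \<inter> {b0})"
            by (rule card_Un_disjoint[OF _ _ d1]) auto
          moreover have "card R = card (R \<inter> {1<..<b0}) + card ((R \<inter> {1}) \<union> (R \<inter> {b0}))"
            by (subst dec, rule card_Un_disjoint) auto
          ultimately show ?thesis by simp
        qed
        then have "even (card R)" using p2 p3 by auto
        moreover have "\<forall>\<alpha>\<in>Arcs. arcOK R \<alpha>" using csets_arcOK[OF R] by auto
        ultimately show "R \<in> Good" unfolding Good_def using RV by auto
      qed
      show ?thesis by (rule count_from[where It="{}" and pt=0 and ot=0, OF _ _ _ _ _ sub]) auto
    qed
  qed
qed

end

lemma prob_bind_pmf: "measure_pmf.prob (bind_pmf M N) X = (\<integral>x. measure_pmf.prob (N x) X \<partial>M)"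
proof -
  have "ennreal (measure_pmf.prob (bind_pmf M N) X) = emeasure (bind_pmf M N) X"
    by (simp add: measure_pmf.emeasure_eq_measure)
  also have "\<dots> = (\<integral>\<^sup>+x. emeasure (N x) X \<partial>M)" by simp
  also have "\<dots> = (\<integral>\<^sup>+x. ennreal (measure_pmf.prob (N x) X) \<partial>M)"
    by (simp add: measure_pmf.emeasure_eq_measure)
  also have "\<dots> = ennreal (\<integral>x. measure_pmf.prob (N x) X \<partial>M)"
    by (rule nn_integral_eq_integral) (auto intro: measure_pmf.integrable_const_bound[where B=1])
  finally show ?thesis by (simp add: integral_nonneg)
qed

lemma ncm_nonempty: assumes "finite S" "even (card S)" shows "ncm S \<noteq> {}" "finite (ncm S)"
proof -
  have "real (card (ncm S)) = cat (card S div 2)" using ncm_card[OF assms(1)] assms(2) by (simp add: fcat_def)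
  then have "card (ncm S) > 0" using cat_pos[of "card S div 2"] by simp
  then show "ncm S \<noteq> {}" "finite (ncm S)" by (auto simp: card_gt_0_iff)
qed

lemma red_sets_props: assumes "R \<in> red_sets n"
  shows "finite R" "even (card R)" "finite ({1..2*n} - R)" "even (card ({1..2*n} - R))" "R \<subseteq> {1..2*n}"
proof -
  show R: "R \<subseteq> {1..2*n}" using assms by (simp add: red_sets_def)
  show f: "finite R" using R by (rule finite_subset) simp
  show e: "even (card R)" using assms by (simp add: red_sets_def)
  show "finite ({1..2*n} - R)" by simp
  have "card ({1..2*n} - R) = 2*n - card R" using R f by (simp add: card_Diff_subset)
  then show "even (card ({1..2*n} - R))" using e by simp
qed

lemma inner_prob:
  assumes "R \<in> red_sets n"
  shows "measure_pmf.prob (pmf_of_set (ncm R) \<bind> (\<lambda>M1. pmf_of_set (ncm ({1..2*n} - R)) \<bind> (\<lambda>M2. return_pmf (R, M1, M2)))) E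
    = (\<Sum>M1\<in>ncm R. (\<Sum>M2\<in>ncm ({1..2*n} - R). indicator E (R, M1, M2)) / card (ncm ({1..2*n} - R))) / card (ncm R)"
proof -
  note rp = red_sets_props[OF assms]
  note n1 = ncm_nonempty[OF rp(1,2)]
  note n2 = ncm_nonempty[OF rp(3,4)]
  define Y where "Y = ncm ({1..2*n} - R)"
  have n2': "Y \<noteq> {}" "finite Y" using n2 unfolding Y_def by auto
  have inner: "measure_pmf.prob (pmf_of_set Y \<bind> (\<lambda>M2. return_pmf (R,M1,M2))) E = (\<Sum>M2\<in>Y. indicator E (R,M1,M2)) / card Y" for M1
    by (simp only: prob_bind_pmf measure_return_pmf integral_pmf_of_set[OF n2'])
  have "measure_pmf.prob (pmf_of_set (ncm R) \<bind> (\<lambda>M1. pmf_of_set Y \<bind> (\<lambda>M2. return_pmf (R, M1, M2)))) E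
      = (\<Sum>M1\<in>ncm R. (\<Sum>M2\<in>Y. indicator E (R, M1, M2)) / card Y) / card (ncm R)"
    by (simp only: prob_bind_pmf[of "pmf_of_set (ncm R)"] inner integral_pmf_of_set[OF n1])
  then show ?thesis unfolding Y_def .
qed

lemma outer_prob:
  "measure_pmf.prob (CP n) E = (\<Sum>R\<in>red_sets n. measure_pmf.prob (pmf_of_set (ncm R) \<bind> (\<lambda>M1. pmf_of_set (ncm ({1..2*n} - R)) \<bind> (\<lambda>M2. return_pmf (R, M1, M2)))) E) / card (red_sets n)"
proof -
  have ne: "red_sets n \<noteq> {}" using red_sets_def by (metis (mono_tags) card.empty empty_iff empty_subsetI even_zero mem_Collect_eq)
  have fin: "finite (red_sets n)" unfolding red_sets_def by (rule finite_subset[of _ "Pow {1..2*n}"]) auto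
  show ?thesis unfolding CP_def by (simp add: prob_bind_pmf integral_pmf_of_set[OF ne fin])
qed


lemma sum_ind_real: "finite A \<Longrightarrow> (\<Sum>x\<in>A. indicator B x :: real) = real (card (A \<inter> B))"
proof -
  assume f: "finite A"
  have "(\<Sum>x\<in>A. indicator B x :: real) = (\<Sum>x\<in>A. of_bool (x \<in> B))" by (simp add: indicator_def)
  also have "\<dots> = real (card (A \<inter> {x. x \<in> B}))" using f by simp
  finally show ?thesis by simp
qed

context GQ begin

definition Ar :: "(nat \<times> nat) set" where "Ar = (\<lambda>i. (xs!i, xs!i+ks!i)) ` {..<sN}"
definition Ab :: "(nat \<times> nat) set" where "Ab = (\<lambda>j. (ys!j, ys!j+ls!j)) ` {..<tN}"

lemma U_red: "i < sN \<Longrightarrow> (xs!i, xs!i+ks!i, True) \<in> Arcs"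
proof -
  assume i: "i < sN"
  have "U!i = (xs!i, xs!i+ks!i, True)" using i unfolding U_def by (simp add: nth_append)
  moreover have "i < length U" using i U_len by simp
  ultimately show ?thesis unfolding Arcs_def by (metis nth_mem)
qed

lemma U_blue: "j < tN \<Longrightarrow> (ys!j, ys!j+ls!j, False) \<in> Arcs"
proof -
  assume j: "j < tN"
  have "U!(sN+j) = (ys!j, ys!j+ls!j, False)" using j unfolding U_def by (simp add: nth_append)
  moreover have "sN + j < length U" using j U_len by simp
  ultimately show ?thesis unfolding Arcs_def by (metis nth_mem)
qed

lemma Ar_Arcs: "p \<in> Ar \<Longrightarrow> (fst p, snd p, True) \<in> Arcs" unfolding Ar_def using U_red by auto
lemma Ab_Arcs: "p \<in> Ab \<Longrightarrow> (fst p, snd p, False) \<in> Arcs" unfolding Ab_def using U_blue by auto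

lemma event_in:
  assumes R: "R \<in> Good" and M1: "Ar \<subseteq> M1" and M2: "Ab \<subseteq> M2"
  shows "(R, M1, M2) \<in> event_A n xs ks ys ls"
proof -
  have ok: "\<And>\<alpha>. \<alpha> \<in> Arcs \<Longrightarrow> arcOK R \<alpha>" using R unfolding Good_def by auto
  have red: "xs!i \<in> R \<and> xs!i + ks!i \<in> R \<and> even (card {z \<in> R. xs!i < z \<and> z < xs!i + ks!i}) \<and> (xs!i, xs!i + ks!i) \<in> M1"
    if "i < sN" for i
  proof -
    have "arcOK R (xs!i, xs!i+ks!i, True)" using ok[OF U_red[OF that]] .
    moreover have "(xs!i, xs!i + ks!i) \<in> Ar" using that unfolding Ar_def by auto
    ultimately show ?thesis using M1 unfolding arcOK_def by auto
  qed
  have blue: "ys!j \<in> {1..2*n} - R \<and> ys!j + ls!j \<in> {1..2*n} - R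
        \<and> even (card {z \<in> {1..2*n} - R. ys!j < z \<and> z < ys!j + ls!j}) \<and> (ys!j, ys!j + ls!j) \<in> M2"
    if "j < tN" for j
  proof -
    have "arcOK R (ys!j, ys!j+ls!j, False)" using ok[OF U_blue[OF that]] .
    moreover have "(ys!j, ys!j + ls!j) \<in> Ab" using that unfolding Ab_def by auto
    ultimately show ?thesis using M2 unfolding arcOK_def V_def by auto
  qed
  show ?thesis unfolding event_A_def using red blue by auto
qed

lemma arcs_ok_red: assumes R: "R \<in> Good" shows "arcs_ok R Ar"
proof -
  have ok: "\<And>\<alpha>. \<alpha> \<in> Arcs \<Longrightarrow> arcOK R \<alpha>" using R unfolding Good_def by auto
  show ?thesis unfolding arcs_ok_def
  proof (intro conjI)
    show "\<forall>(c,d)\<in>Ar. c < d \<and> c \<in> R \<and> d \<in> R \<and> even (card (Sin c d R))"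
    proof clarify
      fix c d assume cd: "(c,d) \<in> Ar"
      have A: "(c,d,True) \<in> Arcs" using Ar_Arcs[OF cd] by simp
      have "Sin c d R = {z\<in>R. c < z \<and> z < d}" unfolding Sin_def by simp
      then show "c < d \<and> c \<in> R \<and> d \<in> R \<and> even (card (Sin c d R))"
        using ok[OF A] A1[OF A] unfolding arcOK_def by simp
    qed
    show "\<forall>p\<in>Ar. \<forall>q\<in>Ar. p \<noteq> q \<longrightarrow> fst p \<noteq> fst q \<and> fst p \<noteq> snd q \<and> snd p \<noteq> fst q \<and> snd p \<noteq> snd q"
    proof (intro ballI impI)
      fix p q assume p: "p \<in> Ar" and q: "q \<in> Ar" and pq: "p \<noteq> q"
      have "(fst p, snd p, True) \<noteq> (fst q, snd q, True)" using pq by (auto simp: prod_eq_iff)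
      from A2[OF Ar_Arcs[OF p] Ar_Arcs[OF q] this]
      show "fst p \<noteq> fst q \<and> fst p \<noteq> snd q \<and> snd p \<noteq> fst q \<and> snd p \<noteq> snd q" using dist2_ne by blast
    qed
    show "\<forall>(c,d)\<in>Ar. \<forall>(e,f)\<in>Ar. \<not> (c < e \<and> e < d \<and> d < f)"
    proof clarify
      fix c d e f assume "(c,d) \<in> Ar" "(e,f) \<in> Ar" "c < e" "e < d" "d < f"
      then show False using A3[OF Ar_Arcs Ar_Arcs, of "(c,d)" "(e,f)"] by simp
    qed
  qed
qed

lemma arcs_ok_blue: assumes R: "R \<in> Good" shows "arcs_ok (V - R) Ab"
proof -
  have ok: "\<And>\<alpha>. \<alpha> \<in> Arcs \<Longrightarrow> arcOK R \<alpha>" using R unfolding Good_def by auto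
  show ?thesis unfolding arcs_ok_def
  proof (intro conjI)
    show "\<forall>(c,d)\<in>Ab. c < d \<and> c \<in> V - R \<and> d \<in> V - R \<and> even (card (Sin c d (V - R)))"
    proof clarify
      fix c d assume cd: "(c,d) \<in> Ab"
      have A: "(c,d,False) \<in> Arcs" using Ab_Arcs[OF cd] by simp
      have "Sin c d (V - R) = {z\<in>V - R. c < z \<and> z < d}" unfolding Sin_def by simp
      then show "c < d \<and> c \<in> V - R \<and> d \<in> V - R \<and> even (card (Sin c d (V - R)))"
        using ok[OF A] A1[OF A] unfolding arcOK_def by simp
    qed
    show "\<forall>p\<in>Ab. \<forall>q\<in>Ab. p \<noteq> q \<longrightarrow> fst p \<noteq> fst q \<and> fst p \<noteq> snd q \<and> snd p \<noteq> fst q \<and> snd p \<noteq> snd q"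
    proof (intro ballI impI)
      fix p q assume p: "p \<in> Ab" and q: "q \<in> Ab" and pq: "p \<noteq> q"
      have "(fst p, snd p, False) \<noteq> (fst q, snd q, False)" using pq by (auto simp: prod_eq_iff)
      from A2[OF Ab_Arcs[OF p] Ab_Arcs[OF q] this]
      show "fst p \<noteq> fst q \<and> fst p \<noteq> snd q \<and> snd p \<noteq> fst q \<and> snd p \<noteq> snd q" using dist2_ne by blast
    qed
    show "\<forall>(c,d)\<in>Ab. \<forall>(e,f)\<in>Ab. \<not> (c < e \<and> e < d \<and> d < f)"
    proof clarify
      fix c d e f assume "(c,d) \<in> Ab" "(e,f) \<in> Ab" "c < e" "e < d" "d < f"
      then show False using A3[OF Ab_Arcs Ab_Arcs, of "(c,d)" "(e,f)"] by simp
    qed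
  qed
qed

lemma Good_red: "Good \<subseteq> red_sets n" unfolding Good_def red_sets_def V_def by auto

lemma g_bound:
  assumes R: "R \<in> Good"
  shows "(\<Sum>M1\<in>ncm R. (\<Sum>M2\<in>ncm ({1..2*n} - R). indicator (event_A n xs ks ys ls) (R, M1, M2)) / card (ncm ({1..2*n} - R))) / card (ncm R)
     \<ge> (\<Prod>p\<in>Ar. arcw p) * (\<Prod>p\<in>Ab. arcw p)"
proof -
  have RS: "R \<in> red_sets n" using R Good_red by auto
  note rp = red_sets_props[OF RS]
  define X where "X = ncm R"
  define Y where "Y = ncm (V - R)"
  have Yd: "ncm ({1..2*n} - R) = Y" unfolding Y_def V_def by simp
  define F1 where "F1 = FF R Ar"
  define F2 where "F2 = FF (V - R) Ab"
  have VR: "finite (V - R)" "even (card (V - R))" using rp(3,4) unfolding V_def by auto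
  have nX: "X \<noteq> {}" "finite X" using ncm_nonempty[OF rp(1,2)] unfolding X_def by auto
  have nY: "Y \<noteq> {}" "finite Y" using ncm_nonempty[OF VR] unfolding Y_def by auto
  have F1X: "F1 \<subseteq> X" "F2 \<subseteq> Y" unfolding F1_def F2_def X_def Y_def FF_def by auto
  have finA: "finite Ar" "finite Ab" unfolding Ar_def Ab_def by auto
  have m1: "real (card F1) \<ge> real (card X) * (\<Prod>p\<in>Ar. arcw p)"
    unfolding F1_def X_def by (rule multi_arc[OF finA(1) rp(1,2) arcs_ok_red[OF R]])
  have m2: "real (card F2) \<ge> real (card Y) * (\<Prod>p\<in>Ab. arcw p)"
    unfolding F2_def Y_def by (rule multi_arc[OF finA(2) VR arcs_ok_blue[OF R]])
  have cX: "real (card X) > 0" "real (card Y) > 0" using nX nY by (auto simp: card_gt_0_iff)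
  have ind: "indicator (event_A n xs ks ys ls) (R, M1, M2) \<ge> (indicator F1 M1 * indicator F2 M2 :: real)" for M1 M2
  proof (cases "M1 \<in> F1 \<and> M2 \<in> F2")
    case True
    then have "Ar \<subseteq> M1" "Ab \<subseteq> M2" unfolding F1_def F2_def FF_def by auto
    then have "(R, M1, M2) \<in> event_A n xs ks ys ls" by (rule event_in[OF R])
    then show ?thesis using True by simp
  next
    case False then show ?thesis by (auto simp: indicator_def)
  qed
  have inner: "(\<Sum>M2\<in>Y. indicator (event_A n xs ks ys ls) (R, M1, M2)) \<ge> indicator F1 M1 * real (card F2)" for M1
  proof -
    have "(\<Sum>M2\<in>Y. indicator (event_A n xs ks ys ls) (R, M1, M2)) \<ge> (\<Sum>M2\<in>Y. indicator F1 M1 * indicator F2 M2 :: real)"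
      by (rule sum_mono) (rule ind)
    also have "(\<Sum>M2\<in>Y. indicator F1 M1 * indicator F2 M2 :: real) = indicator F1 M1 * real (card (Y \<inter> F2))"
      by (simp add: sum_distrib_left[symmetric] sum_ind_real[OF nY(2)])
    also have "Y \<inter> F2 = F2" using F1X by auto
    finally show ?thesis .
  qed
  have "(\<Sum>M1\<in>X. (\<Sum>M2\<in>Y. indicator (event_A n xs ks ys ls) (R, M1, M2)) / card Y)
      \<ge> (\<Sum>M1\<in>X. indicator F1 M1 * real (card F2) / card Y)"
    by (rule sum_mono) (use inner cX in \<open>auto intro: divide_right_mono\<close>)
  also have "(\<Sum>M1\<in>X. indicator F1 M1 * real (card F2) / card Y) = real (card (X \<inter> F1)) * real (card F2) / card Y"
    by (simp add: sum_divide_distrib[symmetric] sum_distrib_right[symmetric] sum_ind_real[OF nX(2)])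
  also have "X \<inter> F1 = F1" using F1X by auto
  finally have S: "(\<Sum>M1\<in>X. (\<Sum>M2\<in>Y. indicator (event_A n xs ks ys ls) (R, M1, M2)) / card Y) / card X
      \<ge> real (card F1) * real (card F2) / card Y / card X"
    using cX by (intro divide_right_mono) auto
  have "real (card F1) * real (card F2) / card Y / card X = (real (card F1) / card X) * (real (card F2) / card Y)"
    by simp
  also have "\<dots> \<ge> (\<Prod>p\<in>Ar. arcw p) * (\<Prod>p\<in>Ab. arcw p)"
  proof (rule mult_mono)
    show "(\<Prod>p\<in>Ar. arcw p) \<le> real (card F1) / real (card X)" using m1 cX by (simp add: field_simps)
    show "(\<Prod>p\<in>Ab. arcw p) \<le> real (card F2) / real (card Y)" using m2 cX by (simp add: field_simps)
  qed (auto simp: prod_nonneg arcw_nonneg)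
  finally show ?thesis using S unfolding X_def Yd by linarith
qed

lemma prob_bound:
  "measure_pmf.prob (CP n) (event_A n xs ks ys ls) \<ge> ((\<Prod>p\<in>Ar. arcw p) * (\<Prod>p\<in>Ab. arcw p)) / 2^(3*(sN+tN)+1)"
proof -
  define W where "W = (\<Prod>p\<in>Ar. arcw p) * (\<Prod>p\<in>Ab. arcw p)"
  define g where "g R = measure_pmf.prob (pmf_of_set (ncm R) \<bind> (\<lambda>M1. pmf_of_set (ncm ({1..2*n} - R)) \<bind> (\<lambda>M2. return_pmf (R, M1, M2)))) (event_A n xs ks ys ls)" for R
  have W0: "W \<ge> 0" unfolding W_def by (simp add: prod_nonneg arcw_nonneg)
  have finRS: "finite (red_sets n)" unfolding red_sets_def by (rule finite_subset[of _ "Pow {1..2*n}"]) auto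
  have cRS: "card (red_sets n) \<le> 2^(2*n)"
  proof -
    have "card (red_sets n) \<le> card (Pow {1..2*n})" by (rule card_mono) (auto simp: red_sets_def)
    then show ?thesis by (simp add: card_Pow)
  qed
  have cRS0: "card (red_sets n) > 0" using finRS unfolding card_gt_0_iff red_sets_def
    by (metis (mono_tags) card.empty empty_iff empty_subsetI even_zero mem_Collect_eq)
  have gG: "g R \<ge> W" if "R \<in> Good" for R
    unfolding g_def W_def inner_prob[OF subsetD[OF Good_red that]] by (rule g_bound[OF that])
  have g0: "g R \<ge> 0" for R unfolding g_def by simp
  have "(\<Sum>R\<in>red_sets n. g R) \<ge> (\<Sum>R\<in>Good. g R)"
    by (rule sum_mono2[OF finRS Good_red]) (use g0 in auto)
  also have "(\<Sum>R\<in>Good. g R) \<ge> (\<Sum>R\<in>Good. W)" by (rule sum_mono) (rule gG)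
  finally have sG: "(\<Sum>R\<in>red_sets n. g R) \<ge> real (card Good) * W" by simp
  have pr: "measure_pmf.prob (CP n) (event_A n xs ks ys ls) = (\<Sum>R\<in>red_sets n. g R) / card (red_sets n)"
    unfolding g_def by (rule outer_prob)
  have "W / 2^(3*(sN+tN)+1) = (2^(2*n) / 2^(3*(sN+tN)+1)) * W / 2^(2*n)" by simp
  also have "\<dots> \<le> real (card Good) * W / 2^(2*n)"
  proof -
    have "2^(2*n) / 2^(3*(sN+tN)+1) \<le> real (card Good)" using Good_count by (simp add: field_simps)
    then show ?thesis using W0 by (intro divide_right_mono mult_right_mono) auto
  qed
  also have "\<dots> \<le> real (card Good) * W / card (red_sets n)"
    using cRS cRS0 W0 by (intro divide_left_mono) (auto intro: mult_pos_pos simp: of_nat_le_iff[symmetric])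
  also have "\<dots> \<le> (\<Sum>R\<in>red_sets n. g R) / card (red_sets n)"
    using sG cRS0 by (intro divide_right_mono) auto
  finally show ?thesis unfolding pr W_def .
qed

lemma xs_inj: "inj_on (\<lambda>i. (xs!i, xs!i+ks!i)) {..<sN}"
proof (rule inj_onI)
  fix i j assume i: "i \<in> {..<sN}" and j: "j \<in> {..<sN}" and e: "(xs!i, xs!i+ks!i) = (xs!j, xs!j+ks!j)"
  show "i = j"
  proof (rule ccontr)
    assume "i \<noteq> j"
    then have "dist2 (E!i) (E!j)" using i j E_len by (intro E_dist) auto
    then show False using e E_nth(1)[of i] E_nth(1)[of j] i j dist2_ne by auto
  qed
qed

lemma ys_inj: "inj_on (\<lambda>j. (ys!j, ys!j+ls!j)) {..<tN}"
proof (rule inj_onI)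
  fix i j assume i: "i \<in> {..<tN}" and j: "j \<in> {..<tN}" and e: "(ys!i, ys!i+ls!i) = (ys!j, ys!j+ls!j)"
  show "i = j"
  proof (rule ccontr)
    assume "i \<noteq> j"
    then have "dist2 (E!(2 * sN+i)) (E!(2 * sN+j))" using i j E_len by (intro E_dist) auto
    then show False using e E_nth(3)[of i] E_nth(3)[of j] i j dist2_ne by auto
  qed
qed

lemma arcw_eq: "arcw (a, a + k) = (1/8) * real k powr (-3/2)"
proof -
  have e: "real k powr (-3/2) = inverse (real k powr (3/2))" using powr_minus[of "real k" "3/2"] by simp
  have "arcw (a, a + k) = 1 / (8 * real k powr (3/2))" unfolding arcw_def by simp
  also have "\<dots> = (1/8) * inverse (real k powr (3/2))" by (simp add: field_simps)
  finally show ?thesis using e by simp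
qed

lemma W_red: "(\<Prod>p\<in>Ar. arcw p) = (1/8)^sN * (\<Prod>i<sN. real (ks!i) powr (-3/2))"
proof -
  have "(\<Prod>p\<in>Ar. arcw p) = (\<Prod>i<sN. arcw (xs!i, xs!i+ks!i))"
    unfolding Ar_def by (subst prod.reindex[OF xs_inj]) simp
  also have "\<dots> = (\<Prod>i<sN. (1/8) * real (ks!i) powr (-3/2))" by (simp only: arcw_eq)
  also have "\<dots> = (1/8)^sN * (\<Prod>i<sN. real (ks!i) powr (-3/2))" by (simp only: prod.distrib prod_constant card_lessThan)
  finally show ?thesis .
qed

lemma W_blue: "(\<Prod>p\<in>Ab. arcw p) = (1/8)^tN * (\<Prod>j<tN. real (ls!j) powr (-3/2))"
proof -
  have "(\<Prod>p\<in>Ab. arcw p) = (\<Prod>j<tN. arcw (ys!j, ys!j+ls!j))"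
    unfolding Ab_def by (subst prod.reindex[OF ys_inj]) simp
  also have "\<dots> = (\<Prod>j<tN. (1/8) * real (ls!j) powr (-3/2))" by (simp only: arcw_eq)
  also have "\<dots> = (1/8)^tN * (\<Prod>j<tN. real (ls!j) powr (-3/2))" by (simp only: prod.distrib prod_constant card_lessThan)
  finally show ?thesis .
qed

lemma final_bound:
  "measure_pmf.prob (CP n) (event_A n xs ks ys ls)
     \<ge> ((1/8)^sN * (1/8)^tN / 2^(3*(sN+tN)+1)) * (\<Prod>i<sN. real (ks!i) powr (-3/2)) * (\<Prod>j<tN. real (ls!j) powr (-3/2))"
proof -
  define P1 where "P1 = (\<Prod>i<sN. real (ks!i) powr (-3/2))"
  define P2 where "P2 = (\<Prod>j<tN. real (ls!j) powr (-3/2))"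
  define D :: real where "D = 2^(3*(sN+tN)+1)"
  define a :: real where "a = (1/8)^sN"
  define b :: real where "b = (1/8)^tN"
  have "((\<Prod>p\<in>Ar. arcw p) * (\<Prod>p\<in>Ab. arcw p)) / D = (a * P1) * (b * P2) / D"
    unfolding W_red W_blue a_def b_def P1_def P2_def by simp
  also have "\<dots> = (a * b / D) * P1 * P2" by (simp add: divide_inverse ac_simps)
  finally have "((\<Prod>p\<in>Ar. arcw p) * (\<Prod>p\<in>Ab. arcw p)) / D = (a * b / D) * P1 * P2" .
  then show ?thesis using prob_bound unfolding D_def a_def b_def P1_def P2_def by simp
qed

end

theorem lemma7p1:
  shows "\<forall>s t :: nat. \<exists>\<alpha> :: real. \<alpha> > 0 \<and>
    (\<forall>n xs ks ys ls. length xs = s \<longrightarrow> length ys = t \<longrightarrow> good n xs ks ys ls \<longrightarrow>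
       measure_pmf.prob (CP n) (event_A n xs ks ys ls)
         \<ge> \<alpha> * (\<Prod>i<s. real (ks!i) powr (-3/2)) * (\<Prod>j<t. real (ls!j) powr (-3/2)))"
proof (intro allI)
  fix s t :: nat
  show "\<exists>\<alpha> :: real. \<alpha> > 0 \<and>
    (\<forall>n xs ks ys ls. length xs = s \<longrightarrow> length ys = t \<longrightarrow> good n xs ks ys ls \<longrightarrow>
       measure_pmf.prob (CP n) (event_A n xs ks ys ls)
         \<ge> \<alpha> * (\<Prod>i<s. real (ks!i) powr (-3/2)) * (\<Prod>j<t. real (ls!j) powr (-3/2)))"
  proof (rule exI[of _ "(1/8)^s * (1/8)^t / 2^(3*(s+t)+1)"], intro conjI allI impI)
    show "(0::real) < (1/8)^s * (1/8)^t / 2^(3*(s+t)+1)" by simp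
    fix n xs ks ys ls assume ls: "length xs = s" "length ys = t" and g: "good n xs ks ys ls"
    interpret GQ n xs ks ys ls by (rule GQ.intro[OF g])
    show "measure_pmf.prob (CP n) (event_A n xs ks ys ls)
         \<ge> (1/8)^s * (1/8)^t / 2^(3*(s+t)+1) * (\<Prod>i<s. real (ks!i) powr (-3/2)) * (\<Prod>j<t. real (ls!j) powr (-3/2))"
      using final_bound ls by simp
  qed
qed


end
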